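(* Let $\varphi$ be a Musielak–Orlicz function of uniformly lower type $p_\varphi^-$ for some $p_\varphi^-\in[1,\infty)$, and suppose the Doob maximal operator $M$ is bounded on $L^{\varphi^*}(\Omega)$. Then there is $C>0$ such that for every $f\in H^S_\varphi(\Omega)$ there exist $h\in G_\varphi(\Omega)$ and $g\in Q_\varphi(\Omega)$ with $f_n=h_n+g_n$ for all $n\in\mathbb Z_+$, $\|h\|_{G_\varphi}\le C\|f\|_{H^S_\varphi}$ and $\|g\|_{Q_\varphi}\le C\|f\|_{H^S_\varphi}$.
   Context: Let $(\Omega,\mathcal F,\mathbb P)$ be a probability space, $(\mathcal F_n)_{n\in\mathbb Z_+}$ a nondecreasing sequence of sub-$\sigma$-algebras, $\mathbb E_n$ the conditional expectations, $M(g):=\sup_n|\mathbb E_ng|$. A Musielak–Orlicz function is $\varphi:\Omega\times[0,\infty)\to[0,\infty)$ with $\varphi(x,\cdot)$ nondecreasing, $\varphi(x,0)=0$, $\lim_{t\to\infty}\varphi(x,t)=\infty$ for each $x$, $\varphi(\cdot,t)$ measurable for each $t$; for such (or $\varphi^*$) $\|g\|_{L^\varphi}:=\inf\{\lambda>0:\int_\Omega\varphi(x,|g|/\lambda)\,d\mathbb P\le1\}$. Uniformly lower type $p$: $\varphi(x,st)\le Cs^p\varphi(x,t)$ for $s\in(0,1)$. $\varphi^*(x,t):=\sup_{u>0}[ut-\varphi(x,u)]$. $\mathcal M$: martingales with $f_0=0$; $d_nf=f_n-f_{n-1}$; $S_n(f)=(\sum_{i\le n}|d_if|^2)^{1/2}$,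 $S(f)=\lim S_n(f)$; $\|f\|_{H^S_\varphi}:=\|S(f)\|_{L^\varphi}$; $\|f\|_{G_\varphi}:=\|\sum_{n\ge1}|d_nf|\|_{L^\varphi}$; $\|f\|_{Q_\varphi}:=\inf\|\lambda_\infty\|_{L^\varphi}$ over nondecreasing nonnegative adapted $(\lambda_n)_{n\in\mathbb Z_+}$ with $S_n(f)\le\lambda_{n-1}$ for all $n\ge1$, $\lambda_\infty=\lim\lambda_n$; each space is the set of $f\in\mathcal M$ with finite quasi-norm. *)

theory Defs
  imports "HOL-Probability.Probability"
begin

definition filtration_seq :: "'a measure \<Rightarrow> (nat \<Rightarrow> 'a measure) \<Rightarrow> bool" where
  "filtration_seq M F \<longleftrightarrow> (\<forall>n. subalgebra M (F n)) \<and> (\<forall>n m. n \<le> m \<longrightarrow> sets (F n) \<subseteq> sets (F m))"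

definition is_martingale0 :: "'a measure \<Rightarrow> (nat \<Rightarrow> 'a measure) \<Rightarrow> (nat \<Rightarrow> 'a \<Rightarrow> real) \<Rightarrow> bool" where
  "is_martingale0 M F f \<longleftrightarrow>
     (\<forall>x\<in>space M. f 0 x = 0) \<and>
     (\<forall>n. integrable M (f n) \<and> f n \<in> borel_measurable (F n)) \<and>
     (\<forall>n. AE x in M. real_cond_exp M (F n) (f (Suc n)) x = f n x)"

definition mart_diff :: "(nat \<Rightarrow> 'a \<Rightarrow> real) \<Rightarrow> nat \<Rightarrow> 'a \<Rightarrow> real" where
  "mart_diff f n x = f n x - f (n - 1) x"

definition sq_fun_n :: "(nat \<Rightarrow> 'a \<Rightarrow> real) \<Rightarrow> nat \<Rightarrow> 'a \<Rightarrow> real" where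
  "sq_fun_n f n x = sqrt (\<Sum>i\<in>{1..n}. (mart_diff f i x)\<^sup>2)"

definition sq_fun :: "(nat \<Rightarrow> 'a \<Rightarrow> real) \<Rightarrow> 'a \<Rightarrow> ennreal" where
  "sq_fun f x = (SUP n. ennreal (sq_fun_n f n x))"

definition musielak_orlicz :: "'a measure \<Rightarrow> ('a \<Rightarrow> real \<Rightarrow> real) \<Rightarrow> bool" where
  "musielak_orlicz M \<phi> \<longleftrightarrow>
     (\<forall>x\<in>space M. mono_on {0..} (\<phi> x) \<and> \<phi> x 0 = 0 \<and> filterlim (\<phi> x) at_top at_top) \<and>
     (\<forall>t\<ge>0. (\<lambda>x. \<phi> x t) \<in> borel_measurable M)"

definition unif_lower_type :: "'a measure \<Rightarrow> ('a \<Rightarrow> real \<Rightarrow> real) \<Rightarrow> real \<Rightarrow> bool" where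
  "unif_lower_type M \<phi> p \<longleftrightarrow>
     (\<exists>C>0. \<forall>x\<in>space M. \<forall>s\<in>{0<..<1}. \<forall>t\<ge>0. \<phi> x (s * t) \<le> C * s powr p * \<phi> x t)"

definition conj_fun :: "('a \<Rightarrow> real \<Rightarrow> real) \<Rightarrow> 'a \<Rightarrow> real \<Rightarrow> ennreal" where
  "conj_fun \<phi> x t = (SUP u\<in>{0<..}. ennreal (u * t - \<phi> x u))"

text \<open>The infimum of the empty set is \<infinity>.\<close>
definition lux :: "'a measure \<Rightarrow> ('a \<Rightarrow> real \<Rightarrow> ennreal) \<Rightarrow> ('a \<Rightarrow> ennreal) \<Rightarrow> ennreal" where
  "lux M \<Phi> g = Inf {ennreal l | l. l > 0 \<and>
      (\<integral>\<^sup>+x. (if g x = \<infinity> then \<infinity> else \<Phi> x (enn2real (g x) / l)) \<partial>M) \<le> 1}"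

definition lux_phi :: "'a measure \<Rightarrow> ('a \<Rightarrow> real \<Rightarrow> real) \<Rightarrow> ('a \<Rightarrow> ennreal) \<Rightarrow> ennreal" where
  "lux_phi M \<phi> g = lux M (\<lambda>x t. ennreal (\<phi> x t)) g"

definition doob_max :: "'a measure \<Rightarrow> (nat \<Rightarrow> 'a measure) \<Rightarrow> ('a \<Rightarrow> real) \<Rightarrow> 'a \<Rightarrow> ennreal" where
  "doob_max M F g x = (SUP n. ennreal \<bar>real_cond_exp M (F n) g x\<bar>)"

definition HS_norm :: "'a measure \<Rightarrow> ('a \<Rightarrow> real \<Rightarrow> real) \<Rightarrow> (nat \<Rightarrow> 'a \<Rightarrow> real) \<Rightarrow> ennreal" where
  "HS_norm M \<phi> f = lux_phi M \<phi> (sq_fun f)"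

definition G_norm :: "'a measure \<Rightarrow> ('a \<Rightarrow> real \<Rightarrow> real) \<Rightarrow> (nat \<Rightarrow> 'a \<Rightarrow> real) \<Rightarrow> ennreal" where
  "G_norm M \<phi> f = lux_phi M \<phi> (\<lambda>x. \<Sum>n. ennreal \<bar>mart_diff f (Suc n) x\<bar>)"

definition Q_control :: "'a measure \<Rightarrow> (nat \<Rightarrow> 'a measure) \<Rightarrow> (nat \<Rightarrow> 'a \<Rightarrow> real) \<Rightarrow> (nat \<Rightarrow> 'a \<Rightarrow> real) \<Rightarrow> bool" where
  "Q_control M F f lam \<longleftrightarrow>
     (\<forall>n. lam n \<in> borel_measurable (F n)) \<and>
     (\<forall>n. \<forall>x\<in>space M. 0 \<le> lam n x \<and> lam n x \<le> lam (Suc n) x) \<and>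
     (\<forall>n\<ge>1. \<forall>x\<in>space M. sq_fun_n f n x \<le> lam (n - 1) x)"

definition Q_norm :: "'a measure \<Rightarrow> (nat \<Rightarrow> 'a measure) \<Rightarrow> ('a \<Rightarrow> real \<Rightarrow> real) \<Rightarrow> (nat \<Rightarrow> 'a \<Rightarrow> real) \<Rightarrow> ennreal" where
  "Q_norm M F \<phi> f = (INF lam\<in>{lam. Q_control M F f lam}. lux_phi M \<phi> (\<lambda>x. SUP n. ennreal (lam n x)))"

end

theory Submission
  imports Defs
begin

definition Qp :: "real set" where "Qp = {q. q \<in> \<rat> \<and> 0 \<le> q}"

definition Phm :: "('a \<Rightarrow> real \<Rightarrow> real) \<Rightarrow> 'a \<Rightarrow> ennreal \<Rightarrow> ennreal" where
  "Phm \<phi> x t = (SUP q\<in>Qp. if ennreal q < t then ennreal (\<phi> x q) else 0)"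

lemma countable_Qp: "countable Qp"
  unfolding Qp_def by (rule countable_subset[OF _ countable_rat]) auto

locale mo_setting =
  fixes M :: "'a measure" and F :: "nat \<Rightarrow> 'a measure" and \<phi> :: "'a \<Rightarrow> real \<Rightarrow> real"
    and C0 K :: real
  assumes prob: "prob_space M"
  and filt: "filtration_seq M F"
  and mo: "musielak_orlicz M \<phi>"
  and C0: "1 \<le> C0"
  and lt: "\<And>x s t. x \<in> space M \<Longrightarrow> 0 < s \<Longrightarrow> s < 1 \<Longrightarrow> 0 \<le> t \<Longrightarrow> \<phi> x (s*t) \<le> C0 * s * \<phi> x t"
  and K: "0 \<le> K"
  and doob: "\<And>g. g \<in> borel_measurable M \<Longrightarrow> integrable M g \<Longrightarrow>
      lux M (conj_fun \<phi>) (\<lambda>x. ennreal \<bar>g x\<bar>) < \<infinity> \<Longrightarrow>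
      lux M (conj_fun \<phi>) (doob_max M F g) \<le> ennreal K * lux M (conj_fun \<phi>) (\<lambda>x. ennreal \<bar>g x\<bar>)"
begin

lemma phi0: "x \<in> space M \<Longrightarrow> \<phi> x 0 = 0"
  using mo unfolding musielak_orlicz_def by auto

lemma phi_mono: "x \<in> space M \<Longrightarrow> 0 \<le> t \<Longrightarrow> t \<le> t' \<Longrightarrow> \<phi> x t \<le> \<phi> x t'"
  using mo unfolding musielak_orlicz_def by (auto intro: mono_onD)

lemma phi_nonneg: "x \<in> space M \<Longrightarrow> 0 \<le> t \<Longrightarrow> 0 \<le> \<phi> x t"
  using phi_mono[of x 0 t] phi0 by auto

lemma phi_meas: "0 \<le> t \<Longrightarrow> (\<lambda>x. \<phi> x t) \<in> borel_measurable M"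
  using mo unfolding musielak_orlicz_def by auto

lemma phi_lim: "x \<in> space M \<Longrightarrow> filterlim (\<phi> x) at_top at_top"
  using mo unfolding musielak_orlicz_def by auto

lemma Phm_mono: "t \<le> t' \<Longrightarrow> Phm \<phi> x t \<le> Phm \<phi> x t'"
  unfolding Phm_def by (rule SUP_mono) (auto intro!: bexI)

lemma Phm_zero: "Phm \<phi> x 0 = 0"
proof -
  have "0 \<in> Qp" by (simp add: Qp_def)
  then show ?thesis unfolding Phm_def by (auto simp: SUP_constant)
qed

lemma Phm_le_phi: "x \<in> space M \<Longrightarrow> 0 \<le> t \<Longrightarrow> Phm \<phi> x (ennreal t) \<le> ennreal (\<phi> x t)"
  unfolding Phm_def
proof (rule SUP_least)
  fix q assume "q \<in> Qp" "0 \<le> t" "x \<in> space M"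
  then show "(if ennreal q < ennreal t then ennreal (\<phi> x q) else 0) \<le> ennreal (\<phi> x t)"
    by (auto simp: Qp_def ennreal_less_iff intro!: ennreal_leI phi_mono)
qed

lemma phi_le_Phm: assumes "x \<in> space M" "0 \<le> t" "ennreal t < t'"
  shows "ennreal (\<phi> x t) \<le> Phm \<phi> x t'"
proof -
  obtain q where q: "q \<in> \<rat>" "t < q" "ennreal q < t'"
  proof (cases t')
    case (real r)
    with assms have "t < r" by (auto simp: ennreal_less_iff)
    from Rats_dense_in_real[OF this] obtain q where "q \<in> \<rat>" "t < q" "q < r" by auto
    then show ?thesis using that real assms by (auto simp: ennreal_less_iff)
  next
    case top
    from Rats_dense_in_real[of t "t+1"] obtain q where "q \<in> \<rat>" "t < q" by auto
    then show ?thesis using that top by auto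
  qed
  have "ennreal (\<phi> x t) \<le> ennreal (\<phi> x q)"
    using q assms by (auto intro!: ennreal_leI phi_mono)
  also have "\<dots> \<le> Phm \<phi> x t'"
    unfolding Phm_def
    by (rule SUP_upper2[of q]) (use q assms in \<open>auto simp: Qp_def\<close>)
  finally show ?thesis .
qed

lemma Phm_top: assumes "x \<in> space M" shows "Phm \<phi> x \<infinity> = \<infinity>"
  unfolding Phm_def infinity_ennreal_def
proof (rule ennreal_SUP_eq_top)
  fix n :: nat
  have "eventually (\<lambda>t. real n \<le> \<phi> x t) at_top"
    using phi_lim[OF assms] by (simp add: filterlim_at_top)
  then obtain T where T: "\<And>t. t \<ge> T \<Longrightarrow> real n \<le> \<phi> x t"
    by (auto simp: eventually_at_top_linorder)
  from Rats_dense_in_real[of "max T 0" "max T 0 + 1"] obtain q where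
    q: "q \<in> \<rat>" "max T 0 < q" by auto
  then show "\<exists>i\<in>Qp. of_nat n \<le> (if ennreal i < top then ennreal (\<phi> x i) else 0)"
    using T[of q] by (intro bexI[of _ q]) (auto simp: Qp_def ennreal_of_nat_eq_real_of_nat intro!: ennreal_leI)
qed

lemma Phm_lt: assumes x: "x \<in> space M" and s: "0 < s" "s < 1"
  shows "Phm \<phi> x (ennreal s * t) \<le> ennreal (C0 * s) * Phm \<phi> x t"
  unfolding Phm_def[of _ _ "ennreal s * t"]
proof (rule SUP_least)
  fix q assume q: "q \<in> Qp"
  show "(if ennreal q < ennreal s * t then ennreal (\<phi> x q) else 0) \<le> ennreal (C0 * s) * Phm \<phi> x t"
  proof (cases "ennreal q < ennreal s * t")
    case True
    have q0: "0 \<le> q" using q by (auto simp: Qp_def)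
    have lt2: "ennreal (q/s) < t"
    proof (cases t)
      case (real r)
      then have "q < s * r" using True q0 s by (auto simp: ennreal_mult[symmetric] ennreal_less_iff)
      then have "q/s < r" using s by (simp add: field_simps)
      then show ?thesis using real q0 s by (auto simp: ennreal_less_iff)
    next
      case top then show ?thesis by simp
    qed
    have "\<phi> x q = \<phi> x (s * (q/s))" using s by simp
    also have "\<dots> \<le> C0 * s * \<phi> x (q/s)" using lt[OF x s, of "q/s"] q0 s by simp
    finally have "ennreal (\<phi> x q) \<le> ennreal (C0 * s * \<phi> x (q/s))"
      by (rule ennreal_leI)
    also have "\<dots> = ennreal (C0 * s) * ennreal (\<phi> x (q/s))"
      using C0 s by (intro ennreal_mult') auto
    also have "\<dots> \<le> ennreal (C0 * s) * Phm \<phi> x t"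
      by (intro mult_left_mono phi_le_Phm x lt2) (use q0 s in auto)
    finally show ?thesis using True by simp
  qed simp
qed

lemma Phm_meas: assumes [measurable]: "g \<in> borel_measurable M"
  shows "(\<lambda>x. Phm \<phi> x (g x)) \<in> borel_measurable M"
  unfolding Phm_def
proof (rule borel_measurable_SUP[OF countable_Qp])
  fix q assume "q \<in> Qp"
  then have [measurable]: "(\<lambda>x. \<phi> x q) \<in> borel_measurable M" by (auto simp: Qp_def intro: phi_meas)
  show "(\<lambda>x. if ennreal q < g x then ennreal (\<phi> x q) else 0) \<in> borel_measurable M"
    by measurable
qed

lemma Phm_SUP_min: "Phm \<phi> x t \<le> (SUP n. Phm \<phi> x (min t (ennreal (real n))))"
  unfolding Phm_def[of _ _ t]
proof (rule SUP_least)
  fix q assume q: "q \<in> Qp"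
  obtain n :: nat where n: "q < real n" using reals_Archimedean2 by blast
  show "(if ennreal q < t then ennreal (\<phi> x q) else 0) \<le> (SUP n. Phm \<phi> x (min t (ennreal (real n))))"
  proof (cases "ennreal q < t")
    case True
    then have "ennreal q < min t (ennreal (real n))" using n q by (auto simp: Qp_def ennreal_less_iff)
    then have "ennreal (\<phi> x q) \<le> Phm \<phi> x (min t (ennreal (real n)))"
      unfolding Phm_def by (intro SUP_upper2[OF q]) auto
    then show ?thesis using True by (auto intro: SUP_upper2)
  qed simp
qed

end

definition rho :: "'a measure \<Rightarrow> ('a \<Rightarrow> real \<Rightarrow> real) \<Rightarrow> ('a \<Rightarrow> ennreal) \<Rightarrow> real \<Rightarrow> ennreal" where
  "rho M \<phi> g l = (\<integral>\<^sup>+x. Phm \<phi> x (ennreal (1/l) * g x) \<partial>M)"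

definition modl :: "'a measure \<Rightarrow> ('a \<Rightarrow> real \<Rightarrow> ennreal) \<Rightarrow> ('a \<Rightarrow> ennreal) \<Rightarrow> real \<Rightarrow> ennreal" where
  "modl M \<Phi> g l = (\<integral>\<^sup>+x. (if g x = \<infinity> then \<infinity> else \<Phi> x (enn2real (g x) / l)) \<partial>M)"

lemma lux_le: "0 < l \<Longrightarrow> modl M \<Phi> g l \<le> 1 \<Longrightarrow> lux M \<Phi> g \<le> ennreal l"
  unfolding lux_def modl_def by (rule Inf_lower) blast

lemma lux_less:
  assumes mono: "\<And>x t t'. x \<in> space M \<Longrightarrow> 0 \<le> t \<Longrightarrow> t \<le> t' \<Longrightarrow> \<Phi> x t \<le> \<Phi> x t'"
    and less: "lux M \<Phi> g < ennreal l"
  shows "modl M \<Phi> g l \<le> 1"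
proof -
  from less obtain y where y: "y \<in> {ennreal l | l. l > 0 \<and>
      (\<integral>\<^sup>+x. (if g x = \<infinity> then \<infinity> else \<Phi> x (enn2real (g x) / l)) \<partial>M) \<le> 1}" "y < ennreal l"
    unfolding lux_def by (auto simp: Inf_less_iff)
  then obtain l' where l': "y = ennreal l'" "l' > 0"
    "(\<integral>\<^sup>+x. (if g x = \<infinity> then \<infinity> else \<Phi> x (enn2real (g x) / l')) \<partial>M) \<le> 1" by auto
  have "l' < l" using y(2) l' by (auto simp: ennreal_less_iff)
  have "modl M \<Phi> g l \<le> (\<integral>\<^sup>+x. (if g x = \<infinity> then \<infinity> else \<Phi> x (enn2real (g x) / l')) \<partial>M)"
    unfolding modl_def
  proof (rule nn_integral_mono)
    fix x assume x: "x \<in> space M"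
    have "enn2real (g x) / l \<le> enn2real (g x) / l'"
      using \<open>l' < l\<close> l' by (intro divide_left_mono) auto
    then show "(if g x = \<infinity> then \<infinity> else \<Phi> x (enn2real (g x) / l))
        \<le> (if g x = \<infinity> then \<infinity> else \<Phi> x (enn2real (g x) / l'))"
      using mono[OF x] \<open>l' < l\<close> l' by auto
  qed
  then show ?thesis using l' by simp
qed

lemma ennreal_eps_lemma:
  fixes X s :: ennreal
  assumes "s < \<infinity>" "0 < Cc" "\<And>l. 0 < l \<Longrightarrow> s < ennreal l \<Longrightarrow> X \<le> ennreal (Cc*l)"
  shows "X \<le> ennreal Cc * s"
proof (rule ennreal_le_epsilon)
  fix e :: real assume e: "0 < e"
  define s0 where "s0 = enn2real s"
  have s: "s = ennreal s0" "0 \<le> s0" using assms(1) by (auto simp: s0_def)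
  have "X \<le> ennreal (Cc * (s0 + e/Cc))"
    using assms(2) s e by (intro assms(3)) (auto simp: ennreal_less_iff intro!: add_nonneg_pos)
  also have "Cc * (s0 + e/Cc) = Cc * s0 + e" using assms(2) by (simp add: field_simps)
  also have "ennreal (Cc * s0 + e) = ennreal (Cc * s0) + ennreal e"
    using assms(2) s e by (intro ennreal_plus) auto
  also have "ennreal (Cc * s0) = ennreal Cc * s"
    using assms(2) s by (simp add: ennreal_mult)
  finally show "X \<le> ennreal Cc * s + ennreal e" .
qed

context mo_setting
begin

abbreviation "modphi \<equiv> modl M (\<lambda>x t. ennreal (\<phi> x t))"

lemma rho_le_modphi: assumes "0 < l" shows "rho M \<phi> g l \<le> modphi g l"
  unfolding rho_def modl_def
proof (rule nn_integral_mono)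
  fix x assume x: "x \<in> space M"
  show "Phm \<phi> x (ennreal (1 / l) * g x) \<le> (if g x = \<infinity> then \<infinity> else ennreal (\<phi> x (enn2real (g x) / l)))"
  proof (cases "g x = \<infinity>")
    case False
    then obtain r where r: "g x = ennreal r" "0 \<le> r" by (cases "g x") auto
    have "ennreal (1/l) * g x = ennreal (r / l)" using r assms by (simp add: ennreal_mult[symmetric])
    then show ?thesis using False r assms Phm_le_phi[OF x, of "r/l"] by simp
  qed simp
qed

lemma modphi_le_rho: assumes "0 < l" shows "modphi g l \<le> rho M \<phi> g (l/2)"
  unfolding rho_def modl_def
proof (rule nn_integral_mono)
  fix x assume x: "x \<in> space M"
  show "(if g x = \<infinity> then \<infinity> else ennreal (\<phi> x (enn2real (g x) / l))) \<le> Phm \<phi> x (ennreal (1 / (l/2)) * g x)"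
  proof (cases "g x = \<infinity>")
    case True
    then have "ennreal (1 / (l/2)) * g x = \<infinity>" using assms by (simp add: ennreal_mult_top)
    then show ?thesis using True Phm_top[OF x] by simp
  next
    case False
    then obtain r where r: "g x = ennreal r" "0 \<le> r" by (cases "g x") auto
    have e: "ennreal (1/(l/2)) * g x = ennreal (2 * (r / l))" using r assms by (simp add: ennreal_mult[symmetric])
    show ?thesis
    proof (cases "r = 0")
      case True then show ?thesis using r phi0[OF x] by simp
    next
      case False
      then have "r/l < 2 * (r/l)" using r assms by (auto simp: field_simps)
      then have "ennreal (r/l) < ennreal (2 * (r/l))" using r assms by (subst ennreal_less_iff) auto
      then show ?thesis using e r \<open>g x \<noteq> \<infinity>\<close> phi_le_Phm[OF x, of "r/l"] assms by simp
    qed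
  qed
qed

lemma rho_mono_AE: "(AE x in M. g x \<le> g' x) \<Longrightarrow> rho M \<phi> g l \<le> rho M \<phi> g' l"
  unfolding rho_def by (rule nn_integral_mono_AE) (auto elim!: eventually_mono intro!: Phm_mono mult_left_mono)

lemma rho_mono_l: "0 < l \<Longrightarrow> l \<le> l' \<Longrightarrow> rho M \<phi> g l' \<le> rho M \<phi> g l"
  unfolding rho_def
  by (rule nn_integral_mono) (auto intro!: Phm_mono mult_right_mono ennreal_leI divide_left_mono)

lemma rho_scale: assumes "0 < c" "0 < l" shows "rho M \<phi> (\<lambda>x. ennreal c * g x) (c*l) = rho M \<phi> g l"
proof -
  have "ennreal (1/(c*l)) * ennreal c = ennreal (1/l)"
    using assms by (simp add: ennreal_mult[symmetric])
  then show ?thesis unfolding rho_def by (simp add: mult.assoc[symmetric])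
qed

lemma rho_tri:
  assumes [measurable]: "g \<in> borel_measurable M" "g' \<in> borel_measurable M"
    and a: "0 < a" and r: "rho M \<phi> g a \<le> 1" "rho M \<phi> g' a \<le> 1"
  shows "rho M \<phi> (\<lambda>x. g x + g' x) (4*C0*a) \<le> 1"
proof -
  let ?u = "\<lambda>x. ennreal (1/a) * g x" and ?v = "\<lambda>x. ennreal (1/a) * g' x"
  have s: "0 < 1/(2*C0)" "1/(2*C0) < 1" using C0 by (auto simp: field_simps)
  have pw: "Phm \<phi> x (ennreal (1/(4*C0*a)) * (g x + g' x)) \<le> ennreal (1/2) * (Phm \<phi> x (?u x) + Phm \<phi> x (?v x))"
    if x: "x \<in> space M" for x
  proof -
    have e1: "ennreal (1/(4*C0*a)) * 2 = ennreal (1/(2*C0)) * ennreal (1/a)"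
      using C0 a by (simp add: ennreal_mult[symmetric] ennreal_numeral[symmetric] del: ennreal_numeral)
    have "ennreal (1/(4*C0*a)) * (g x + g' x) \<le> ennreal (1/(4*C0*a)) * (2 * max (g x) (g' x))"
    proof (rule mult_left_mono)
      show "g x + g' x \<le> 2 * max (g x) (g' x)"
        by (simp add: mult_2 add_mono)
    qed simp
    also have "\<dots> = ennreal (1/(2*C0)) * (ennreal (1/a) * max (g x) (g' x))"
      by (simp add: mult.assoc[symmetric] e1)
    also have "ennreal (1/a) * max (g x) (g' x) = max (?u x) (?v x)"
    proof (cases "g x \<le> g' x")
      case True
      then have "?u x \<le> ?v x" by (intro mult_left_mono) auto
      then show ?thesis using True by (simp add: max_absorb2)
    next
      case False
      then have "?v x \<le> ?u x" by (intro mult_left_mono) auto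
      then show ?thesis using False by (simp add: max_absorb1)
    qed
    finally have "Phm \<phi> x (ennreal (1/(4*C0*a)) * (g x + g' x)) \<le> Phm \<phi> x (ennreal (1/(2*C0)) * max (?u x) (?v x))"
      by (rule Phm_mono)
    also have "\<dots> \<le> ennreal (C0 * (1/(2*C0))) * Phm \<phi> x (max (?u x) (?v x))"
      by (rule Phm_lt[OF x s])
    also have "C0 * (1/(2*C0)) = 1/2" using C0 by simp
    also have "Phm \<phi> x (max (?u x) (?v x)) \<le> Phm \<phi> x (?u x) + Phm \<phi> x (?v x)"
      by (cases "?u x \<le> ?v x") (auto simp: max_def)
    finally show ?thesis by (simp add: mult_left_mono)
  qed
  have m1[measurable]: "(\<lambda>x. Phm \<phi> x (?u x)) \<in> borel_measurable M" by (rule Phm_meas) simp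
  have m2[measurable]: "(\<lambda>x. Phm \<phi> x (?v x)) \<in> borel_measurable M" by (rule Phm_meas) simp
  have m3: "(\<lambda>x. Phm \<phi> x (?u x) + Phm \<phi> x (?v x)) \<in> borel_measurable M" by measurable
  have "rho M \<phi> (\<lambda>x. g x + g' x) (4*C0*a) \<le> (\<integral>\<^sup>+x. ennreal (1/2) * (Phm \<phi> x (?u x) + Phm \<phi> x (?v x)) \<partial>M)"
    unfolding rho_def by (rule nn_integral_mono) (rule pw)
  also have "(\<integral>\<^sup>+x. ennreal (1/2) * (Phm \<phi> x (?u x) + Phm \<phi> x (?v x)) \<partial>M) = ennreal (1/2) * (rho M \<phi> g a + rho M \<phi> g' a)"
    unfolding rho_def by (simp only: nn_integral_cmult[OF m3] nn_integral_add[OF m1 m2])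
  also have "\<dots> \<le> ennreal (1/2) * 2"
  proof (rule mult_left_mono)
    have "rho M \<phi> g a + rho M \<phi> g' a \<le> 1 + 1" by (rule add_mono[OF r])
    then show "rho M \<phi> g a + rho M \<phi> g' a \<le> 2" by (simp add: one_add_one)
  qed simp
  also have "\<dots> = 1" using ennreal_mult'[of "1/2" 2] by simp
  finally show ?thesis .
qed

end

definition Psi :: "('a \<Rightarrow> real \<Rightarrow> real) \<Rightarrow> 'a \<Rightarrow> ennreal \<Rightarrow> real \<Rightarrow> ennreal" where
  "Psi \<phi> x v m = (if v = \<infinity> then \<infinity> else (SUP q\<in>Qp. ennreal (q * (enn2real v / m) - \<phi> x q)))"

context mo_setting
begin

lemma sfs: "sigma_finite_subalgebra M (F n)"
proof -
  have sub: "subalgebra M (F n)" using filt unfolding filtration_seq_def by auto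
  have "finite_measure M" using prob unfolding prob_space_def by auto
  then have "finite_measure_subalgebra M (F n)"
    using sub by (simp add: finite_measure_subalgebra_def finite_measure_subalgebra_axioms_def)
  then show ?thesis by (rule finite_measure_subalgebra_is_sigma_finite)
qed

lemma subalg: "subalgebra M (F n)" using filt unfolding filtration_seq_def by auto

lemma meas_lift: assumes "m \<le> n" "f \<in> borel_measurable (F m)" shows "f \<in> borel_measurable (F n)"
proof -
  have "sets (F m) \<subseteq> sets (F n)" using filt assms(1) unfolding filtration_seq_def by auto
  moreover have "space (F m) = space (F n)" using subalg[of m] subalg[of n] by (simp add: subalgebra_def)
  ultimately show ?thesis using assms(2) measurable_mono[of borel borel "F m" "F n"] by auto
qed

lemma meas_M: "f \<in> borel_measurable (F n) \<Longrightarrow> f \<in> borel_measurable M"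
  by (rule measurable_from_subalg[OF subalg])

lemma conj_mono: assumes "0 \<le> t" "t \<le> t'" shows "conj_fun \<phi> x t \<le> conj_fun \<phi> x t'"
  unfolding conj_fun_def
  by (rule SUP_mono) (use assms in \<open>auto intro!: bexI ennreal_leI mult_left_mono\<close>)

lemma Psi_le_conj: assumes x: "x \<in> space M" "0 < m"
  shows "Psi \<phi> x v m \<le> (if v = \<infinity> then \<infinity> else conj_fun \<phi> x (enn2real v / m))"
proof (cases "v = \<infinity>")
  case False
  have "(SUP q\<in>Qp. ennreal (q * (enn2real v / m) - \<phi> x q)) \<le> conj_fun \<phi> x (enn2real v / m)"
  proof (rule SUP_least)
    fix q assume q: "q \<in> Qp"
    show "ennreal (q * (enn2real v / m) - \<phi> x q) \<le> conj_fun \<phi> x (enn2real v / m)"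
    proof (cases "q = 0")
      case True then show ?thesis using phi0[OF x(1)] by simp
    next
      case False
      then have "0 < q" using q by (auto simp: Qp_def)
      then show ?thesis unfolding conj_fun_def by (intro SUP_upper) auto
    qed
  qed
  then show ?thesis using False by (simp add: Psi_def)
qed (simp add: Psi_def)

lemma Psi_meas: assumes [measurable]: "v \<in> borel_measurable M"
  shows "(\<lambda>x. Psi \<phi> x (v x) m) \<in> borel_measurable M"
proof -
  have [measurable]: "(\<lambda>x. SUP q\<in>Qp. ennreal (q * (enn2real (v x) / m) - \<phi> x q)) \<in> borel_measurable M"
  proof (rule borel_measurable_SUP[OF countable_Qp])
    fix q assume "q \<in> Qp"
    then have [measurable]: "(\<lambda>x. \<phi> x q) \<in> borel_measurable M" by (auto simp: Qp_def intro: phi_meas)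
    show "(\<lambda>x. ennreal (q * (enn2real (v x) / m) - \<phi> x q)) \<in> borel_measurable M" by measurable
  qed
  show ?thesis unfolding Psi_def by measurable
qed

lemma young:
  assumes x: "x \<in> space M" and b: "0 < b" and m: "0 < m"
  shows "ennreal (1/(2*b)) * u * (ennreal (1/m) * v) \<le> Phm \<phi> x (ennreal (1/b) * u) + Psi \<phi> x v m"
proof (cases "v = \<infinity>")
  case True then show ?thesis by (simp add: Psi_def)
next
  case vf: False
  show ?thesis
  proof (cases "u = \<infinity>")
    case True
    then have "ennreal (1/b) * u = \<infinity>" using b by (simp add: ennreal_mult_top)
    then show ?thesis using Phm_top[OF x] by simp
  next
    case uf: False
    obtain uu where uu: "u = ennreal uu" "0 \<le> uu" using uf by (cases u) auto
    obtain vv where vv: "v = ennreal vv" "0 \<le> vv" using vf by (cases v) auto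
    define t where "t = uu / (2*b)"
    define y where "y = vv / m"
    have t0: "0 \<le> t" "0 \<le> y" using uu vv b m by (auto simp: t_def y_def)
    have lhs: "ennreal (1/(2*b)) * u * (ennreal (1/m) * v) = ennreal (t * y)"
      using uu vv b m t0 by (simp add: t_def y_def ennreal_mult[symmetric])
    show ?thesis
    proof (cases "t = 0")
      case True then show ?thesis by (subst lhs) simp
    next
      case False
      then have "t < 2*t" using t0 by auto
      from Rats_dense_in_real[OF this] obtain q where q: "q \<in> \<rat>" "t < q" "q < 2*t" by auto
      have qQ: "q \<in> Qp" using q t0 by (auto simp: Qp_def)
      have "ennreal (t*y) \<le> ennreal (q*y)" using q t0 by (intro ennreal_leI mult_right_mono) auto
      also have "\<dots> \<le> ennreal (\<phi> x q) + ennreal (q*y - \<phi> x q)"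
      proof (cases "\<phi> x q \<le> q*y")
        case True
        then have "ennreal (\<phi> x q) + ennreal (q*y - \<phi> x q) = ennreal (q*y)"
          using phi_nonneg[OF x, of q] q t0 by (subst ennreal_plus[symmetric]) auto
        then show ?thesis by simp
      next
        case False
        then have "ennreal (q*y) \<le> ennreal (\<phi> x q)" by (intro ennreal_leI) auto
        then show ?thesis by (rule order.trans) simp
      qed
      also have "ennreal (\<phi> x q) \<le> Phm \<phi> x (ennreal (1/b) * u)"
      proof -
        have e: "ennreal (1/b) * u = ennreal (2*t)" using uu b by (simp add: t_def ennreal_mult[symmetric])
        show ?thesis unfolding e by (rule phi_le_Phm[OF x]) (use q t0 in \<open>auto simp: ennreal_less_iff\<close>)
      qed
      also have "ennreal (q*y - \<phi> x q) \<le> Psi \<phi> x v m"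
        unfolding Psi_def using vf vv qQ by (auto simp: y_def intro!: SUP_upper2[OF qQ])
      finally show ?thesis using lhs by (simp add: add_mono)
    qed
  qed
qed

lemma conj_bound:
  assumes x: "x \<in> space M" and w: "0 \<le> w" and ur: "0 \<le> ur" and urw: "ur = 0 \<Longrightarrow> w = 0"
    and P: "Phm \<phi> x (ennreal ur) = ennreal (ur*w)" and J: "1 \<le> J"
  shows "conj_fun \<phi> x (w/(C0*J)) \<le> ennreal (1/J) * Phm \<phi> x (ennreal ur)"
proof -
  have rhs: "ennreal (1/J) * Phm \<phi> x (ennreal ur) = ennreal (ur*w/J)"
    using P J ur w by (simp add: ennreal_mult[symmetric])
  have "conj_fun \<phi> x (w/(C0*J)) \<le> ennreal (ur*w/J)"
    unfolding conj_fun_def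
  proof (rule SUP_least)
    fix v :: real assume "v \<in> {0<..}"
    then have v: "0 < v" by auto
    have pv: "0 \<le> \<phi> x v" using phi_nonneg[OF x] v by auto
    have C0p: "0 < C0" using C0 by auto
    have "v * (w / (C0 * J)) - \<phi> x v \<le> ur*w/J"
    proof (cases "w = 0")
      case True then show ?thesis using pv by simp
    next
      case wn: False
      then have urp: "0 < ur" using urw ur by fastforce
      show ?thesis
      proof (cases "v \<le> ur")
        case True
        have "v * (w / (C0 * J)) = (v / C0) * w / J" by simp
        also have "\<dots> \<le> ur * w / J"
        proof -
          have "v / C0 \<le> v" using C0 v by (simp add: divide_le_eq)
          then have "v / C0 \<le> ur" using True by linarith
          then show ?thesis using w J by (intro divide_right_mono mult_right_mono) auto
        qed
        finally show ?thesis using pv by linarith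
      next
        case False
        define s where "s = ur / v"
        have s: "0 < s" "s < 1" using False urp v by (auto simp: s_def)
        have sv: "ennreal s * ennreal v = ennreal ur"
        proof -
          have "ennreal s * ennreal v = ennreal (s * v)" using s v by (intro ennreal_mult[symmetric]) auto
          also have "s * v = ur" using v by (simp add: s_def)
          finally show ?thesis .
        qed
        have "ennreal (ur*w) = Phm \<phi> x (ennreal s * ennreal v)"
          using P by (simp add: sv)
        also have "\<dots> \<le> ennreal (C0 * s) * Phm \<phi> x (ennreal v)" by (rule Phm_lt[OF x s])
        also have "\<dots> \<le> ennreal (C0 * s) * ennreal (\<phi> x v)"
          by (intro mult_left_mono Phm_le_phi[OF x]) (use v in auto)
        also have "\<dots> = ennreal (C0 * s * \<phi> x v)" by (rule ennreal_mult'[symmetric]) (use C0 s in auto)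
        finally have "ur * w \<le> C0 * s * \<phi> x v" using C0 s pv by (subst (asm) ennreal_le_iff) auto
        then have "ur * w \<le> C0 * (ur / v) * \<phi> x v" by (simp add: s_def)
        then have "v * w \<le> C0 * \<phi> x v" using urp v by (simp add: field_simps)
        then have "v * w / (C0 * J) \<le> \<phi> x v / J" using C0p J by (simp add: field_simps)
        also have "\<phi> x v / J \<le> \<phi> x v" using J pv mult_left_mono[OF J pv] by (simp add: divide_le_eq)
        finally have "v * (w / (C0 * J)) - \<phi> x v \<le> 0" by simp
        also have "0 \<le> ur * w / J" using ur w J by simp
        finally show ?thesis .
      qed
    qed
    then show "ennreal (v * (w / (C0 * J)) - \<phi> x v) \<le> ennreal (ur*w/J)" by (rule ennreal_leI)
  qed
  then show ?thesis using rhs by simp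
qed

lemma w_bound:
  assumes x: "x \<in> space M" and ur: "0 < ur" "ur \<le> N" and PN: "Phm \<phi> x (ennreal N) \<le> ennreal R" and R: "0 \<le> R"
  shows "enn2real (Phm \<phi> x (ennreal ur)) \<le> C0 * R / N * ur"
proof (cases "ur = N")
  case True
  have "enn2real (Phm \<phi> x (ennreal ur)) \<le> R" using PN True R by (intro enn2real_leI) auto
  also have "\<dots> \<le> C0 * R" using mult_right_mono[OF C0 R] by simp
  also have "\<dots> = C0 * R / N * ur" using True ur by simp
  finally show ?thesis .
next
  case False
  define s where "s = ur / N"
  have Np: "0 < N" using ur by auto
  have s: "0 < s" "s < 1" using False ur Np by (auto simp: s_def)
  have "ennreal s * ennreal N = ennreal (s * N)" using s Np by (intro ennreal_mult[symmetric]) auto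
  also have "s * N = ur" using Np by (simp add: s_def)
  finally have "Phm \<phi> x (ennreal ur) = Phm \<phi> x (ennreal s * ennreal N)" by simp
  also have "\<dots> \<le> ennreal (C0 * s) * Phm \<phi> x (ennreal N)" by (rule Phm_lt[OF x s])
  also have "\<dots> \<le> ennreal (C0 * s) * ennreal R" by (intro mult_left_mono PN) auto
  also have "\<dots> = ennreal (C0 * s * R)" using C0 s R by (simp add: ennreal_mult[symmetric])
  finally have "enn2real (Phm \<phi> x (ennreal ur)) \<le> C0 * s * R" using C0 s R by (intro enn2real_leI) auto
  also have "\<dots> = C0 * R / N * ur" by (simp add: s_def)
  finally show ?thesis .
qed

lemma cond_exp_step:
  assumes Zi: "integrable M Z" and Zp: "\<And>x. x \<in> space M \<Longrightarrow> 0 \<le> Z x"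
    and wm[measurable]: "w \<in> borel_measurable M" and w0: "\<And>x. x \<in> space M \<Longrightarrow> 0 \<le> w x"
    and wc: "\<And>x. x \<in> space M \<Longrightarrow> w x \<le> c"
  shows "(\<integral>\<^sup>+x. ennreal (real_cond_exp M (F k) Z x) * ennreal (w x) \<partial>M)
     \<le> (\<integral>\<^sup>+x. ennreal (Z x) * doob_max M F w x \<partial>M)"
proof -
  interpret sigma_finite_subalgebra M "F k" by (rule sfs)
  interpret prob_space M by (rule prob)
  have Zm[measurable]: "Z \<in> borel_measurable M" using Zi by auto
  define E where "E = real_cond_exp M (F k) Z"
  define Ew where "Ew = real_cond_exp M (F k) w"
  have Em[measurable]: "E \<in> borel_measurable M" "E \<in> borel_measurable (F k)" unfolding E_def by auto
  have Ewm[measurable]: "Ew \<in> borel_measurable M" "Ew \<in> borel_measurable (F k)" unfolding Ew_def by auto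
  have c0: "0 \<le> c" using wc w0 prob_space.not_empty[OF prob] by (meson ex_in_conv order.trans)
  have wi: "integrable M w" by (rule integrable_const_bound[of _ c]) (use w0 wc in auto)
  have Ei: "integrable M E" unfolding E_def by (rule real_cond_exp_int(1)[OF Zi])
  have Epos: "AE x in M. 0 \<le> E x" unfolding E_def by (rule real_cond_exp_pos) (use Zp in auto)
  have Ewb: "AE x in M. \<bar>Ew x\<bar> \<le> c"
  proof -
    have "AE x in M. Ew x \<le> c" unfolding Ew_def by (rule real_cond_exp_le_c[OF wi]) (use wc in auto)
    moreover have "AE x in M. 0 \<le> Ew x" unfolding Ew_def by (rule real_cond_exp_pos) (use w0 in auto)
    ultimately show ?thesis by auto
  qed
  have Ewi: "integrable M (\<lambda>x. E x * w x)"
    by (rule Bochner_Integration.integrable_bound[of _ "\<lambda>x. c * E x"]) (use Ei w0 wc c0 in \<open>auto intro!: AE_I2 simp: abs_mult mult_right_mono mult.commute\<close>)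
  have bnd: "AE x in M. norm (\<bar>Ew x\<bar> * Z x) \<le> norm (c * Z x)"
    using Ewb AE_space
  proof eventually_elim
    case (elim x)
    then show ?case using Zp[of x] c0 by (auto simp: abs_mult intro!: mult_right_mono)
  qed
  have EwZi: "integrable M (\<lambda>x. Ew x * Z x)"
    by (rule Bochner_Integration.integrable_bound[of _ "\<lambda>x. c * Z x"]) (use Zi bnd in \<open>auto simp: abs_mult\<close>)
  have aEwZi: "integrable M (\<lambda>x. \<bar>Ew x\<bar> * Z x)"
    by (rule Bochner_Integration.integrable_bound[of _ "\<lambda>x. c * Z x"]) (use Zi bnd in auto)
  have "(\<integral>\<^sup>+x. ennreal (E x) * ennreal (w x) \<partial>M) = (\<integral>\<^sup>+x. ennreal (E x * w x) \<partial>M)"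
    by (rule nn_integral_cong) (use w0 in \<open>simp add: ennreal_mult''\<close>)
  also have "\<dots> = ennreal (\<integral>x. E x * w x \<partial>M)"
  proof (rule nn_integral_eq_integral[OF Ewi])
    show "AE x in M. 0 \<le> E x * w x" using Epos AE_space
    proof eventually_elim
      case (elim x) then show ?case using w0[of x] by simp
    qed
  qed
  also have "(\<integral>x. E x * w x \<partial>M) = (\<integral>x. E x * Ew x \<partial>M)"
    unfolding Ew_def by (rule real_cond_exp_intg(2)[symmetric]) (use Ewi in auto)
  also have "\<dots> = (\<integral>x. Ew x * E x \<partial>M)" by (simp add: mult.commute)
  also have "\<dots> = (\<integral>x. Ew x * Z x \<partial>M)"
    unfolding E_def by (rule real_cond_exp_intg(2)) (use EwZi in auto)
  also have "\<dots> \<le> (\<integral>x. \<bar>Ew x\<bar> * Z x \<partial>M)"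
    by (rule integral_mono[OF EwZi aEwZi]) (use Zp in \<open>auto intro!: mult_right_mono\<close>)
  also have "ennreal \<dots> = (\<integral>\<^sup>+x. ennreal (\<bar>Ew x\<bar> * Z x) \<partial>M)"
    by (rule nn_integral_eq_integral[OF aEwZi, symmetric]) (use Zp in auto)
  also have "\<dots> \<le> (\<integral>\<^sup>+x. ennreal (Z x) * doob_max M F w x \<partial>M)"
  proof (rule nn_integral_mono)
    fix x assume x: "x \<in> space M"
    have "ennreal (\<bar>Ew x\<bar> * Z x) = ennreal (Z x) * ennreal \<bar>Ew x\<bar>"
      using Zp[OF x] by (simp add: ennreal_mult mult.commute)
    also have "ennreal \<bar>Ew x\<bar> \<le> doob_max M F w x"
      unfolding doob_max_def Ew_def by (rule SUP_upper) auto
    finally show "ennreal (\<bar>Ew x\<bar> * Z x) \<le> ennreal (Z x) * doob_max M F w x"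
      by (simp add: mult_left_mono)
  qed
  finally show ?thesis by (simp add: E_def ennreal_leI)
qed

end

context mo_setting
begin

lemma key_trunc:
  fixes Z :: "nat \<Rightarrow> 'a \<Rightarrow> real" and b N R :: real
  assumes Zi: "\<And>k. integrable M (Z k)" and Zp: "\<And>k x. x \<in> space M \<Longrightarrow> 0 \<le> Z k x"
    and b: "0 < b" and rB: "rho M \<phi> (\<lambda>x. \<Sum>k. ennreal (Z k x)) b \<le> 1"
    and N: "0 < N" and R: "0 < R"
  shows "(\<integral>\<^sup>+x. Phm \<phi> x (if Phm \<phi> x (ennreal N) \<le> ennreal R
        then min (ennreal (1/(8*(K*C0+1)*b)) * (\<Sum>k. ennreal (real_cond_exp M (F k) (Z k) x))) (ennreal N)
        else 0) \<partial>M) \<le> ennreal (1/2)"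
proof -
  interpret prob_space M by (rule prob)
  define l where "l = 8*(K*C0+1)*b"
  have KC0: "0 \<le> K*C0" using K C0 by simp
  have l: "0 < l" unfolding l_def using KC0 b by simp
  define A where "A = (\<lambda>x. \<Sum>k. ennreal (real_cond_exp M (F k) (Z k) x))"
  define B where "B = (\<lambda>x. \<Sum>k. ennreal (Z k x))"
  have Zm[measurable]: "\<And>k. Z k \<in> borel_measurable M" using Zi by auto
  have Am[measurable]: "A \<in> borel_measurable M" unfolding A_def by measurable
  have Bm[measurable]: "B \<in> borel_measurable M" unfolding B_def by measurable
  have PNm[measurable]: "(\<lambda>x. Phm \<phi> x (ennreal N)) \<in> borel_measurable M" by (rule Phm_meas) simp
  define u where "u = (\<lambda>x. if Phm \<phi> x (ennreal N) \<le> ennreal R then min (ennreal (1/l) * A x) (ennreal N) else 0)"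
  have um[measurable]: "u \<in> borel_measurable M" unfolding u_def by measurable
  define ur where "ur = (\<lambda>x. enn2real (u x))"
  have urm[measurable]: "ur \<in> borel_measurable M" unfolding ur_def by measurable
  have u_fin: "u x \<le> ennreal N" for x unfolding u_def by auto
  have u_eq: "ennreal (ur x) = u x" for x
    using u_fin[of x] unfolding ur_def by (intro ennreal_enn2real) (meson ennreal_less_top le_less_trans)
  have ur0: "0 \<le> ur x" for x unfolding ur_def by simp
  have urN: "ur x \<le> N" for x unfolding ur_def using u_fin[of x] N by (intro enn2real_leI) auto
  have u_le: "u x \<le> ennreal (1/l) * A x" for x unfolding u_def by auto
  define P where "P = (\<lambda>x. Phm \<phi> x (u x))"
  have Pm[measurable]: "P \<in> borel_measurable M" unfolding P_def by (rule Phm_meas) simp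
  have PR: "P x \<le> ennreal R" if x: "x \<in> space M" for x
  proof (cases "Phm \<phi> x (ennreal N) \<le> ennreal R")
    case True
    then have "P x \<le> Phm \<phi> x (ennreal N)" unfolding P_def by (intro Phm_mono u_fin)
    then show ?thesis using True by simp
  next
    case False then show ?thesis by (simp add: P_def u_def Phm_zero)
  qed
  define w where "w = (\<lambda>x. if 0 < ur x then enn2real (P x) / ur x else 0)"
  have wm[measurable]: "w \<in> borel_measurable M" unfolding w_def by measurable
  have w0: "0 \<le> w x" for x unfolding w_def using ur0[of x] by simp
  have urw: "ur x = 0 \<Longrightarrow> w x = 0" for x unfolding w_def by simp
  have wb: "w x \<le> C0*R/N" if x: "x \<in> space M" for x
  proof (cases "0 < ur x")
    case True
    then have "u x \<noteq> 0" using u_eq[of x] by auto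
    then have cond: "Phm \<phi> x (ennreal N) \<le> ennreal R" unfolding u_def by (auto split: if_splits)
    have "enn2real (Phm \<phi> x (ennreal (ur x))) \<le> C0 * R / N * ur x"
      by (rule w_bound[OF x True urN cond]) (use R in auto)
    then have "enn2real (P x) \<le> C0 * R / N * ur x" by (simp add: P_def u_eq)
    then show ?thesis using True by (simp add: w_def divide_le_eq)
  next
    case False then show ?thesis using C0 R N by (simp add: w_def)
  qed
  have Peq: "P x = ennreal (ur x * w x)" if x: "x \<in> space M" for x
  proof (cases "0 < ur x")
    case True
    have "ur x * w x = enn2real (P x)" using True by (simp add: w_def)
    moreover have "P x \<noteq> \<infinity>" using PR[OF x] by (auto simp: top_unique)
    ultimately show ?thesis by (simp add: ennreal_enn2real_if)
  next
    case False
    then have "ur x = 0" using ur0[of x] by simp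
    then have "u x = 0" using u_eq[of x] by simp
    then show ?thesis using \<open>ur x = 0\<close> by (simp add: P_def Phm_zero)
  qed
  define I where "I = (\<integral>\<^sup>+x. P x \<partial>M)"
  have I_R: "I \<le> ennreal R"
  proof -
    have "I \<le> (\<integral>\<^sup>+x. ennreal R \<partial>M)" unfolding I_def by (rule nn_integral_mono) (rule PR)
    also have "\<dots> = ennreal R" by (simp add: emeasure_space_1)
    finally show ?thesis .
  qed
  define Ir where "Ir = enn2real I"
  have I_eq: "I = ennreal Ir" unfolding Ir_def using I_R by (intro ennreal_enn2real[symmetric]) (meson ennreal_less_top le_less_trans)
  have Ir0: "0 \<le> Ir" unfolding Ir_def by simp
  define J where "J = max 1 Ir"
  have J: "1 \<le> J" "Ir \<le> J" unfolding J_def by auto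
  have KCJ: "0 \<le> K*C0*J" using mult_nonneg_nonneg[OF KC0, of J] J by simp
  have wi: "integrable M w"
    by (rule integrable_const_bound[of _ "C0*R/N"]) (use w0 wb in \<open>auto intro!: AE_I2\<close>)
  have lux_w: "lux M (conj_fun \<phi>) (\<lambda>x. ennreal \<bar>w x\<bar>) \<le> ennreal (C0*J)"
  proof (rule lux_le)
    show "0 < C0*J" using C0 J by simp
    have "modl M (conj_fun \<phi>) (\<lambda>x. ennreal \<bar>w x\<bar>) (C0*J) = (\<integral>\<^sup>+x. conj_fun \<phi> x (w x/(C0*J)) \<partial>M)"
      unfolding modl_def by (rule nn_integral_cong) (use w0 in simp)
    also have "\<dots> \<le> (\<integral>\<^sup>+x. ennreal (1/J) * P x \<partial>M)"
    proof (rule nn_integral_mono)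
      fix x assume x: "x \<in> space M"
      have "Phm \<phi> x (ennreal (ur x)) = ennreal (ur x * w x)" using Peq[OF x] by (simp add: P_def u_eq)
      from conj_bound[OF x w0 ur0 urw this J(1)]
      show "conj_fun \<phi> x (w x/(C0*J)) \<le> ennreal (1/J) * P x" by (simp add: P_def u_eq)
    qed
    also have "\<dots> = ennreal (1/J) * I" unfolding I_def by (rule nn_integral_cmult) simp
    also have "\<dots> = ennreal (Ir/J)"
    proof -
      have "ennreal (1/J) * I = ennreal (1/J * Ir)" unfolding I_eq by (rule ennreal_mult'[symmetric]) (use J in auto)
      then show ?thesis by simp
    qed
    also have "\<dots> \<le> 1" using J Ir0 by (simp add: divide_le_eq)
    finally show "modl M (conj_fun \<phi>) (\<lambda>x. ennreal \<bar>w x\<bar>) (C0*J) \<le> 1" .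
  qed
  have lux_fin: "lux M (conj_fun \<phi>) (\<lambda>x. ennreal \<bar>w x\<bar>) < \<infinity>"
    unfolding infinity_ennreal_def using lux_w by (meson ennreal_less_top le_less_trans)
  define Mw where "Mw = doob_max M F w"
  have Mwm[measurable]: "Mw \<in> borel_measurable M" unfolding Mw_def doob_max_def by measurable
  define m where "m = K*C0*J + 1"
  have m: "0 < m" unfolding m_def using KCJ by simp
  have "lux M (conj_fun \<phi>) Mw \<le> ennreal K * ennreal (C0*J)"
    unfolding Mw_def using doob[OF wm wi lux_fin] mult_left_mono[OF lux_w, of "ennreal K"] by simp
  also have "\<dots> = ennreal (K*C0*J)" using K C0 J by (simp add: ennreal_mult[symmetric] mult.assoc)
  also have "\<dots> < ennreal m" unfolding m_def using KCJ by (subst ennreal_less_iff) auto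
  finally have "modl M (conj_fun \<phi>) Mw m \<le> 1"
    by (intro lux_less[of M "conj_fun \<phi>"]) (auto intro: conj_mono)
  then have PsiI: "(\<integral>\<^sup>+x. Psi \<phi> x (Mw x) m \<partial>M) \<le> 1"
    unfolding modl_def by (rule order.trans[rotated]) (rule nn_integral_mono, rule Psi_le_conj[OF _ m])
  have BMw: "(\<integral>\<^sup>+x. B x * Mw x \<partial>M) \<le> ennreal (4*b*m)"
  proof -
    have c: "ennreal (1/(2*b)) * ennreal (1/m) = ennreal (1/(2*b*m))"
      using b m by (simp add: ennreal_mult[symmetric])
    have "ennreal (1/(2*b*m)) * (\<integral>\<^sup>+x. B x * Mw x \<partial>M) = (\<integral>\<^sup>+x. ennreal (1/(2*b)) * B x * (ennreal (1/m) * Mw x) \<partial>M)"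
    proof -
      have eqx: "ennreal (1/(2*b)) * B x * (ennreal (1/m) * Mw x) = ennreal (1/(2*b*m)) * (B x * Mw x)" for x
      proof -
        have "ennreal (1/(2*b)) * B x * (ennreal (1/m) * Mw x) = (ennreal (1/(2*b)) * ennreal (1/m)) * (B x * Mw x)"
          by (simp only: mult_ac)
        then show ?thesis by (simp only: c)
      qed
      show ?thesis unfolding eqx by (rule nn_integral_cmult[symmetric]) simp
    qed
    also have "\<dots> \<le> (\<integral>\<^sup>+x. Phm \<phi> x (ennreal (1/b) * B x) + Psi \<phi> x (Mw x) m \<partial>M)"
      by (rule nn_integral_mono) (rule young[OF _ b m])
    also have "\<dots> = rho M \<phi> B b + (\<integral>\<^sup>+x. Psi \<phi> x (Mw x) m \<partial>M)"
      unfolding rho_def by (rule nn_integral_add) (auto intro!: Phm_meas Psi_meas)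
    also have "\<dots> \<le> 1 + 1" using rB PsiI by (intro add_mono) (auto simp: B_def)
    finally have h: "ennreal (1/(2*b*m)) * (\<integral>\<^sup>+x. B x * Mw x \<partial>M) \<le> 2" by (simp add: one_add_one)
    have "(\<integral>\<^sup>+x. B x * Mw x \<partial>M) = ennreal (2*b*m) * (ennreal (1/(2*b*m)) * (\<integral>\<^sup>+x. B x * Mw x \<partial>M))"
      using b m by (simp add: mult.assoc[symmetric] ennreal_mult[symmetric])
    also have "\<dots> \<le> ennreal (2*b*m) * 2" by (intro mult_left_mono h) simp
    also have "\<dots> = ennreal (4*b*m)" using b m by (simp add: ennreal_mult[symmetric] ennreal_numeral[symmetric] del: ennreal_numeral)
    finally show ?thesis .
  qed
  have IA: "I \<le> ennreal (1/l) * (\<integral>\<^sup>+x. A x * ennreal (w x) \<partial>M)"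
  proof -
    have "I \<le> (\<integral>\<^sup>+x. ennreal (1/l) * (A x * ennreal (w x)) \<partial>M)"
      unfolding I_def
    proof (rule nn_integral_mono)
      fix x assume x: "x \<in> space M"
      have "P x = ennreal (ur x) * ennreal (w x)" using Peq[OF x] ennreal_mult'[OF ur0[of x], of "w x"] by simp
      also have "\<dots> \<le> (ennreal (1/l) * A x) * ennreal (w x)" using u_le[of x] by (intro mult_right_mono) (auto simp: u_eq)
      finally show "P x \<le> ennreal (1/l) * (A x * ennreal (w x))" by (simp add: mult.assoc)
    qed
    also have "\<dots> = ennreal (1/l) * (\<integral>\<^sup>+x. A x * ennreal (w x) \<partial>M)" by (rule nn_integral_cmult) simp
    finally show ?thesis .
  qed
  have AB: "(\<integral>\<^sup>+x. A x * ennreal (w x) \<partial>M) \<le> (\<integral>\<^sup>+x. B x * Mw x \<partial>M)"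
  proof -
    have "(\<integral>\<^sup>+x. A x * ennreal (w x) \<partial>M) = (\<integral>\<^sup>+x. (\<Sum>k. ennreal (real_cond_exp M (F k) (Z k) x) * ennreal (w x)) \<partial>M)"
      unfolding A_def by (simp add: ennreal_suminf_multc)
    also have "\<dots> = (\<Sum>k. \<integral>\<^sup>+x. ennreal (real_cond_exp M (F k) (Z k) x) * ennreal (w x) \<partial>M)"
      by (rule nn_integral_suminf) simp
    also have "\<dots> \<le> (\<Sum>k. \<integral>\<^sup>+x. ennreal (Z k x) * Mw x \<partial>M)"
      by (intro suminf_le summableI cond_exp_step[OF Zi Zp wm w0 wb, unfolded Mw_def[symmetric]])
    also have "\<dots> = (\<integral>\<^sup>+x. (\<Sum>k. ennreal (Z k x) * Mw x) \<partial>M)"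
      by (rule nn_integral_suminf[symmetric]) simp
    also have "\<dots> = (\<integral>\<^sup>+x. B x * Mw x \<partial>M)"
      unfolding B_def by (simp add: ennreal_suminf_multc)
    finally show ?thesis .
  qed
  have "I \<le> ennreal (1/l) * ennreal (4*b*m)"
    using IA AB BMw by (meson mult_left_mono order.trans zero_le)
  also have "\<dots> = ennreal (4*b*m/l)" using l b m by (simp add: ennreal_mult[symmetric])
  finally have Ir_le: "Ir \<le> 4*b*m/l" using I_eq l b m by simp
  have gen: "\<And>D. 0 < D \<Longrightarrow> 4*b*m/(8*D*b) = m/(2*D)" using b by (simp add: field_simps)
  have "4*b*m/l = m / (2*(K*C0+1))" unfolding l_def by (rule gen) (use KC0 in simp)
  also have "\<dots> \<le> J/2"
  proof -
    have "m \<le> (K*C0+1) * J" unfolding m_def using J KC0 by (simp add: algebra_simps)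
    then show ?thesis using KC0 by (simp add: field_simps)
  qed
  finally have "Ir \<le> J/2" using Ir_le by linarith
  then have "Ir \<le> 1/2" unfolding J_def by (cases "1 \<le> Ir") auto
  then have "I \<le> ennreal (1/2)" unfolding I_eq by (rule ennreal_leI)
  then show ?thesis unfolding I_def P_def u_def l_def A_def .
qed

end

lemma sqrt_step:
  fixes a d :: real assumes a: "0 \<le> a"
  shows "a \<le> sqrt (a^2 + d^2)" "\<bar>d\<bar> \<le> sqrt (a^2 + d^2)"
    "2*a < sqrt (a^2 + d^2) \<Longrightarrow> \<bar>d\<bar> \<le> 2*(sqrt (a^2 + d^2) - a)"
proof -
  show 1: "a \<le> sqrt (a^2 + d^2)" by (rule real_le_rsqrt) simp
  show 2: "\<bar>d\<bar> \<le> sqrt (a^2 + d^2)" by (rule real_le_rsqrt) simp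
  assume "2*a < sqrt (a^2 + d^2)"
  then show "\<bar>d\<bar> \<le> 2*(sqrt (a^2 + d^2) - a)" using 2 by (smt (verit))
qed

lemma sq_sum_le:
  fixes a :: "nat \<Rightarrow> real"
  assumes "finite A" "\<And>k. k \<in> A \<Longrightarrow> 0 \<le> a k"
  shows "(\<Sum>k\<in>A. (a k)^2) \<le> (\<Sum>k\<in>A. a k)^2"
  using assms
proof (induction A rule: finite_induct)
  case (insert x F)
  have s0: "0 \<le> (\<Sum>k\<in>F. a k)" using insert by (auto intro: sum_nonneg)
  have ax: "0 \<le> a x" using insert by auto
  have "(\<Sum>k\<in>insert x F. (a k)^2) = (a x)^2 + (\<Sum>k\<in>F. (a k)^2)" using insert by simp
  also have "\<dots> \<le> (a x)^2 + (\<Sum>k\<in>F. a k)^2" using insert by simp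
  also have "\<dots> \<le> (a x + (\<Sum>k\<in>F. a k))^2" using s0 ax by (simp add: power2_eq_square algebra_simps)
  also have "\<dots> = (\<Sum>k\<in>insert x F. a k)^2" using insert by simp
  finally show ?case .
qed simp

lemma Q_real:
  fixes z e dd :: "nat \<Rightarrow> real"
  assumes zd: "\<And>k. (z k)^2 \<le> (dd k)^2" and zl: "\<bar>z (Suc m)\<bar> \<le> 2 * sqrt (\<Sum>k\<in>{1..m}. (dd k)^2)"
  shows "sqrt (\<Sum>k\<in>{1..Suc m}. (z k + e k)^2) \<le> 4 * sqrt (\<Sum>k\<in>{1..m}. (dd k)^2) + 2 * (\<Sum>k\<in>{1..Suc m}. \<bar>e k\<bar>)"
proof -
  define s where "s = sqrt (\<Sum>k\<in>{1..m}. (dd k)^2)"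
  define T where "T = (\<Sum>k\<in>{1..Suc m}. \<bar>e k\<bar>)"
  have s0: "0 \<le> s" unfolding s_def by (intro real_sqrt_ge_zero sum_nonneg) simp
  have T0: "0 \<le> T" unfolding T_def by (simp add: sum_nonneg)
  have ss: "s^2 = (\<Sum>k\<in>{1..m}. (dd k)^2)" unfolding s_def by (rule real_sqrt_pow2) (auto intro: sum_nonneg)
  have "(\<Sum>k\<in>{1..Suc m}. (z k + e k)^2) \<le> (\<Sum>k\<in>{1..Suc m}. 2*(z k)^2 + 2*(e k)^2)"
  proof (rule sum_mono)
    fix k
    have "0 \<le> (z k - e k)^2" by simp
    then show "(z k + e k)^2 \<le> 2*(z k)^2 + 2*(e k)^2" by (simp add: power2_eq_square algebra_simps)
  qed
  also have "\<dots> = 2 * (\<Sum>k\<in>{1..Suc m}. (z k)^2) + 2 * (\<Sum>k\<in>{1..Suc m}. (e k)^2)"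
    by (simp add: sum.distrib sum_distrib_left)
  also have "(\<Sum>k\<in>{1..Suc m}. (z k)^2) \<le> 5 * s^2"
  proof -
    have "(\<Sum>k\<in>{1..Suc m}. (z k)^2) = (\<Sum>k\<in>{1..m}. (z k)^2) + (z (Suc m))^2"
      by (simp add: sum.cl_ivl_Suc)
    also have "(\<Sum>k\<in>{1..m}. (z k)^2) \<le> s^2" unfolding ss by (rule sum_mono) (rule zd)
    also have "z (Suc m) ^ 2 \<le> (2 * s) ^ 2"
    proof -
      have "\<bar>z (Suc m)\<bar> \<le> 2 * s" using zl by (simp add: s_def)
      then have "(\<bar>z (Suc m)\<bar>)^2 \<le> (2 * s)^2" by (rule power_mono) simp
      then show ?thesis by simp
    qed
    finally show ?thesis by (simp add: power2_eq_square)
  qed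
  also have "(\<Sum>k\<in>{1..Suc m}. (e k)^2) \<le> T^2"
  proof -
    have "(\<Sum>k\<in>{1..Suc m}. (e k)^2) = (\<Sum>k\<in>{1..Suc m}. \<bar>e k\<bar>^2)" by simp
    also have "\<dots> \<le> T^2" unfolding T_def by (rule sq_sum_le) auto
    finally show ?thesis .
  qed
  finally have h0: "(\<Sum>k\<in>{1..Suc m}. (z k + e k)^2) \<le> 2 * (5 * s^2) + 2 * T^2"
    by (simp add: mult_left_mono)
  have sT: "0 \<le> s * T" using s0 T0 by simp
  have alg: "2 * (5 * s^2) + 2 * T^2 \<le> (4 * s + 2*T)^2"
    using sT by (simp add: power2_eq_square algebra_simps)
  have h: "(\<Sum>k\<in>{1..Suc m}. (z k + e k)^2) \<le> (4 * s + 2*T)^2" using h0 alg by linarith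
  have "sqrt (\<Sum>k\<in>{1..Suc m}. (z k + e k)^2) \<le> sqrt ((4 * s + 2*T)^2)" using h by (rule real_sqrt_le_mono)
  also have "\<dots> = 4 * s + 2*T" using s0 T0 by simp
  finally show ?thesis by (simp add: s_def T_def)
qed

context mo_setting
begin

lemma key:
  fixes Z :: "nat \<Rightarrow> 'a \<Rightarrow> real" and b :: real
  assumes Zi: "\<And>k. integrable M (Z k)" and Zp: "\<And>k x. x \<in> space M \<Longrightarrow> 0 \<le> Z k x"
    and b: "0 < b" and rB: "rho M \<phi> (\<lambda>x. \<Sum>k. ennreal (Z k x)) b \<le> 1"
  shows "rho M \<phi> (\<lambda>x. \<Sum>k. ennreal (real_cond_exp M (F k) (Z k) x)) (8*(K*C0+1)*b) \<le> 1"
proof -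
  define l where "l = 8*(K*C0+1)*b"
  have KC0: "0 \<le> K*C0" using K C0 by simp
  have l: "0 < l" unfolding l_def using KC0 b by simp
  define A where "A = (\<lambda>x. \<Sum>k. ennreal (real_cond_exp M (F k) (Z k) x))"
  have Zm[measurable]: "\<And>k. Z k \<in> borel_measurable M" using Zi by auto
  have Am[measurable]: "A \<in> borel_measurable M" unfolding A_def by measurable
  have step1: "(\<integral>\<^sup>+x. Phm \<phi> x (min (ennreal (1/l) * A x) (ennreal (real n))) \<partial>M) \<le> ennreal (1/2)" for n :: nat
  proof (cases "n = 0")
    case True then show ?thesis by (simp add: Phm_zero)
  next
    case False
    define N where "N = real n"
    have N: "0 < N" using False by (simp add: N_def)
    define g where "g = (\<lambda>j x. Phm \<phi> x (if Phm \<phi> x (ennreal N) \<le> ennreal (real (Suc j))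
        then min (ennreal (1/l) * A x) (ennreal N) else 0))"
    have PNm[measurable]: "(\<lambda>x. Phm \<phi> x (ennreal N)) \<in> borel_measurable M" by (rule Phm_meas) simp
    have gm: "g j \<in> borel_measurable M" for j unfolding g_def by (rule Phm_meas) measurable
    have inc: "incseq g"
    proof (rule incseq_SucI, rule le_funI)
      fix j x
      show "g j x \<le> g (Suc j) x"
      proof (cases "Phm \<phi> x (ennreal N) \<le> ennreal (real (Suc j))")
        case True
        then have "Phm \<phi> x (ennreal N) \<le> ennreal (real (Suc (Suc j)))"
          by (rule order.trans) (simp add: ennreal_leI)
        then have "g (Suc j) x = Phm \<phi> x (min (ennreal (1/l) * A x) (ennreal N))"
          unfolding g_def by (simp only: if_True)
        moreover have "g j x = Phm \<phi> x (min (ennreal (1/l) * A x) (ennreal N))"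
          using True unfolding g_def by (simp only: if_True)
        ultimately show ?thesis by simp
      next
        case False then show ?thesis by (simp add: g_def Phm_zero)
      qed
    qed
    have "(\<integral>\<^sup>+x. Phm \<phi> x (min (ennreal (1/l) * A x) (ennreal (real n))) \<partial>M) \<le> (\<integral>\<^sup>+x. (SUP j. g j x) \<partial>M)"
    proof (rule nn_integral_mono)
      fix x assume x: "x \<in> space M"
      obtain j :: nat where j: "\<phi> x N \<le> real j" using real_arch_simple by blast
      have "Phm \<phi> x (ennreal N) \<le> ennreal (\<phi> x N)" using Phm_le_phi[OF x] N by simp
      also have "\<dots> \<le> ennreal (real (Suc j))" using j by (intro ennreal_leI) simp
      finally have "g j x = Phm \<phi> x (min (ennreal (1/l) * A x) (ennreal (real n)))"
        by (simp add: g_def N_def)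
      then show "Phm \<phi> x (min (ennreal (1/l) * A x) (ennreal (real n))) \<le> (SUP j. g j x)"
        by (metis SUP_upper UNIV_I)
    qed
    also have "\<dots> = (SUP j. integral\<^sup>N M (g j))" by (rule nn_integral_monotone_convergence_SUP[OF inc gm])
    also have "\<dots> \<le> ennreal (1/2)"
    proof (rule SUP_least)
      fix j
      show "integral\<^sup>N M (g j) \<le> ennreal (1/2)"
        using key_trunc[OF Zi Zp b rB N, of "real (Suc j)"] unfolding g_def l_def A_def by simp
    qed
    finally show ?thesis .
  qed
  define f where "f = (\<lambda>n x. Phm \<phi> x (min (ennreal (1/l) * A x) (ennreal (real n))))"
  have fm: "f n \<in> borel_measurable M" for n unfolding f_def by (rule Phm_meas) measurable
  have finc: "incseq f"
    by (rule incseq_SucI, rule le_funI) (auto simp: f_def intro!: Phm_mono min.mono ennreal_leI)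
  have "rho M \<phi> A l \<le> (\<integral>\<^sup>+x. (SUP n. f n x) \<partial>M)"
    unfolding rho_def f_def by (rule nn_integral_mono) (rule Phm_SUP_min)
  also have "\<dots> = (SUP n. integral\<^sup>N M (f n))" by (rule nn_integral_monotone_convergence_SUP[OF finc fm])
  also have "\<dots> \<le> ennreal (1/2)" by (rule SUP_least) (unfold f_def, rule step1)
  also have "\<dots> \<le> ennreal 1" by (rule ennreal_leI) simp
  finally show ?thesis unfolding A_def l_def by simp
qed

end

definition xiD :: "(nat \<Rightarrow> 'a \<Rightarrow> real) \<Rightarrow> nat \<Rightarrow> 'a \<Rightarrow> real" where
  "xiD f n x = (if 2 * sq_fun_n f (n-1) x < sq_fun_n f n x then mart_diff f n x else 0)"

definition etaD :: "'a measure \<Rightarrow> (nat \<Rightarrow> 'a measure) \<Rightarrow> (nat \<Rightarrow> 'a \<Rightarrow> real) \<Rightarrow> nat \<Rightarrow> 'a \<Rightarrow> real" where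
  "etaD M F f n x = (if n = 0 then 0 else real_cond_exp M (F (n-1)) (xiD f n) x)"

definition hD :: "'a measure \<Rightarrow> (nat \<Rightarrow> 'a measure) \<Rightarrow> (nat \<Rightarrow> 'a \<Rightarrow> real) \<Rightarrow> nat \<Rightarrow> 'a \<Rightarrow> real" where
  "hD M F f n x = (\<Sum>k\<in>{1..n}. (xiD f k x - etaD M F f k x))"

definition gD :: "'a measure \<Rightarrow> (nat \<Rightarrow> 'a measure) \<Rightarrow> (nat \<Rightarrow> 'a \<Rightarrow> real) \<Rightarrow> nat \<Rightarrow> 'a \<Rightarrow> real" where
  "gD M F f n x = f n x - hD M F f n x"

lemma S_nonneg: "0 \<le> sq_fun_n f n x"
  unfolding sq_fun_n_def by (intro real_sqrt_ge_zero sum_nonneg) simp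

lemma S_zero: "sq_fun_n f 0 x = 0"
  unfolding sq_fun_n_def by simp

lemma S_Suc: "sq_fun_n f (Suc n) x = sqrt ((sq_fun_n f n x)^2 + (mart_diff f (Suc n) x)^2)"
proof -
  have "(sq_fun_n f n x)^2 = (\<Sum>i\<in>{1..n}. (mart_diff f i x)\<^sup>2)"
    unfolding sq_fun_n_def by (rule real_sqrt_pow2) (auto intro: sum_nonneg)
  then show ?thesis unfolding sq_fun_n_def by (simp add: sum.cl_ivl_Suc)
qed

lemma S_mono_Suc: "sq_fun_n f n x \<le> sq_fun_n f (Suc n) x"
  unfolding S_Suc by (rule sqrt_step(1)[OF S_nonneg])

lemma xi_bound: "\<bar>xiD f (Suc n) x\<bar> \<le> 2 * (sq_fun_n f (Suc n) x - sq_fun_n f n x)"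
proof (cases "2 * sq_fun_n f n x < sq_fun_n f (Suc n) x")
  case True
  then have "\<bar>mart_diff f (Suc n) x\<bar> \<le> 2 * (sq_fun_n f (Suc n) x - sq_fun_n f n x)"
    unfolding S_Suc by (intro sqrt_step(3)[OF S_nonneg]) (simp add: S_Suc[symmetric])
  then show ?thesis using True by (simp add: xiD_def)
next
  case False then show ?thesis using S_mono_Suc[of f n x] by (simp add: xiD_def)
qed

lemma xi_partial: "(\<Sum>k<n. \<bar>xiD f (Suc k) x\<bar>) \<le> 2 * sq_fun_n f n x"
proof (induction n)
  case 0 then show ?case by (simp add: S_zero)
next
  case (Suc n)
  then show ?case using xi_bound[of f n x] by simp
qed

lemma xi_sum_le: "(\<Sum>k. ennreal \<bar>xiD f (Suc k) x\<bar>) \<le> ennreal 2 * sq_fun f x"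
proof -
  have "(\<Sum>k. ennreal \<bar>xiD f (Suc k) x\<bar>) + 0 \<le> ennreal 2 * sq_fun f x"
  proof (rule ennreal_suminf_bound_add)
    fix N
    have "(\<Sum>k<N. ennreal \<bar>xiD f (Suc k) x\<bar>) = ennreal (\<Sum>k<N. \<bar>xiD f (Suc k) x\<bar>)" by simp
    also have "\<dots> \<le> ennreal (2 * sq_fun_n f N x)" by (rule ennreal_leI) (rule xi_partial)
    also have "\<dots> = ennreal 2 * ennreal (sq_fun_n f N x)" by (rule ennreal_mult) (auto simp: S_nonneg)
    also have "\<dots> \<le> ennreal 2 * sq_fun f x"
      unfolding sq_fun_def by (intro mult_left_mono SUP_upper) auto
    finally show "(\<Sum>k<N. ennreal \<bar>xiD f (Suc k) x\<bar>) + 0 \<le> ennreal 2 * sq_fun f x" by simp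
  qed
  then show ?thesis by simp
qed

lemma mart_diff_g:
  assumes "1 \<le> k"
  shows "mart_diff (gD M F f) k x = (mart_diff f k x - xiD f k x) + etaD M F f k x"
proof -
  obtain j where k: "k = Suc j" using assms by (cases k) auto
  have "hD M F f (Suc j) x = hD M F f j x + (xiD f (Suc j) x - etaD M F f (Suc j) x)"
    unfolding hD_def by (simp add: sum.cl_ivl_Suc)
  then show ?thesis unfolding mart_diff_def gD_def k by simp
qed

lemma mart_diff_h: "mart_diff (hD M F f) (Suc n) x = xiD f (Suc n) x - etaD M F f (Suc n) x"
  unfolding mart_diff_def hD_def by (simp add: sum.cl_ivl_Suc)

context mo_setting
begin

lemma meas_facts:
  assumes mart: "is_martingale0 M F f"
  shows "\<And>k n. k \<le> n \<Longrightarrow> f k \<in> borel_measurable (F n)"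
    and "\<And>k n. k \<le> n \<Longrightarrow> mart_diff f k \<in> borel_measurable (F n)"
    and "\<And>k n. k \<le> n \<Longrightarrow> sq_fun_n f k \<in> borel_measurable (F n)"
    and "\<And>n. xiD f n \<in> borel_measurable (F n)"
    and "\<And>k n. k \<le> Suc n \<Longrightarrow> etaD M F f k \<in> borel_measurable (F n)"
    and "\<And>n. hD M F f n \<in> borel_measurable (F n)"
    and "\<And>n. gD M F f n \<in> borel_measurable (F n)"
proof -
  have fmF: "f n \<in> borel_measurable (F n)" for n using mart unfolding is_martingale0_def by auto
  show fF: "f k \<in> borel_measurable (F n)" if "k \<le> n" for k n by (rule meas_lift[OF that fmF])
  show dF: "mart_diff f k \<in> borel_measurable (F n)" if "k \<le> n" for k n
    unfolding mart_diff_def using fF[of k n] fF[of "k-1" n] that by (intro borel_measurable_diff) auto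
  show SF: "sq_fun_n f k \<in> borel_measurable (F n)" if "k \<le> n" for k n
    unfolding sq_fun_n_def
  proof (rule measurable_compose[OF _ borel_measurable_sqrt])
    show "(\<lambda>x. \<Sum>i = 1..k. (mart_diff f i x)\<^sup>2) \<in> borel_measurable (F n)"
    proof (rule borel_measurable_sum)
      fix i assume "i \<in> {1..k}"
      then have [measurable]: "mart_diff f i \<in> borel_measurable (F n)" using that by (intro dF) auto
      show "(\<lambda>x. (mart_diff f i x)\<^sup>2) \<in> borel_measurable (F n)" by measurable
    qed
  qed
  show xiF: "xiD f n \<in> borel_measurable (F n)" for n
  proof -
    have [measurable]: "sq_fun_n f (n-1) \<in> borel_measurable (F n)" "sq_fun_n f n \<in> borel_measurable (F n)"
      "mart_diff f n \<in> borel_measurable (F n)" by (auto intro: SF dF)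
    show ?thesis unfolding xiD_def by measurable
  qed
  show etaF: "etaD M F f k \<in> borel_measurable (F n)" if "k \<le> Suc n" for k n
  proof (cases "k = 0")
    case True then show ?thesis by (simp add: etaD_def[abs_def])
  next
    case False
    have "(\<lambda>x. real_cond_exp M (F (k-1)) (xiD f k) x) \<in> borel_measurable (F (k-1))" by simp
    then have "(\<lambda>x. real_cond_exp M (F (k-1)) (xiD f k) x) \<in> borel_measurable (F n)"
      by (rule meas_lift[rotated]) (use that in simp)
    moreover have "etaD M F f k = (\<lambda>x. real_cond_exp M (F (k-1)) (xiD f k) x)"
      using False by (simp add: etaD_def[abs_def])
    ultimately show ?thesis by simp
  qed
  show hF: "hD M F f n \<in> borel_measurable (F n)" for n
    unfolding hD_def
  proof (rule borel_measurable_sum)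
    fix k assume k: "k \<in> {1..n}"
    have [measurable]: "xiD f k \<in> borel_measurable (F n)" by (rule meas_lift[OF _ xiF]) (use k in auto)
    have [measurable]: "etaD M F f k \<in> borel_measurable (F n)" by (rule etaF) (use k in auto)
    show "(\<lambda>x. xiD f k x - etaD M F f k x) \<in> borel_measurable (F n)" by measurable
  qed
  show "gD M F f n \<in> borel_measurable (F n)" for n
    unfolding gD_def using fmF[of n] hF[of n] by (intro borel_measurable_diff) auto
qed

lemma int_facts:
  assumes mart: "is_martingale0 M F f"
  shows "\<And>n. integrable M (mart_diff f n)"
    and "\<And>n. integrable M (xiD f n)"
    and "\<And>n. integrable M (etaD M F f n)"
    and "\<And>n. integrable M (hD M F f n)"
    and "\<And>n. integrable M (gD M F f n)"
proof -
  have fi: "integrable M (f n)" for n using mart unfolding is_martingale0_def by auto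
  show di: "integrable M (mart_diff f n)" for n
    unfolding mart_diff_def using fi by (intro Bochner_Integration.integrable_diff) auto
  show xii: "integrable M (xiD f n)" for n
  proof (rule Bochner_Integration.integrable_bound[OF di])
    show "xiD f n \<in> borel_measurable M" using meas_facts(4)[OF mart] by (rule meas_M)
    show "AE x in M. norm (xiD f n x) \<le> norm (mart_diff f n x)" by (rule AE_I2) (simp add: xiD_def)
  qed
  show etai: "integrable M (etaD M F f n)" for n
  proof (cases "n = 0")
    case True then show ?thesis by (simp add: etaD_def[abs_def])
  next
    case False
    have "integrable M (real_cond_exp M (F (n-1)) (xiD f n))"
      by (rule sigma_finite_subalgebra.real_cond_exp_int(1)[OF sfs xii])
    then show ?thesis using False by (simp add: etaD_def[abs_def])
  qed
  show hi: "integrable M (hD M F f n)" for n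
    unfolding hD_def[abs_def] using xii etai by (intro Bochner_Integration.integrable_sum Bochner_Integration.integrable_diff) auto
  show "integrable M (gD M F f n)" for n
    unfolding gD_def[abs_def] using fi hi by (intro Bochner_Integration.integrable_diff) auto
qed

lemma h_mart: assumes mart: "is_martingale0 M F f" shows "is_martingale0 M F (hD M F f)"
  unfolding is_martingale0_def
proof (intro conjI allI ballI)
  fix x show "hD M F f 0 x = 0" by (simp add: hD_def)
next
  fix n show "integrable M (hD M F f n)" by (rule int_facts(4)[OF mart])
next
  fix n show "hD M F f n \<in> borel_measurable (F n)" by (rule meas_facts(6)[OF mart])
next
  fix n
  interpret sigma_finite_subalgebra M "F n" by (rule sfs)
  have eq: "hD M F f (Suc n) = (\<lambda>x. hD M F f n x + (xiD f (Suc n) x - etaD M F f (Suc n) x))"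
    by (rule ext) (simp add: hD_def sum.cl_ivl_Suc)
  have etaeq: "etaD M F f (Suc n) = real_cond_exp M (F n) (xiD f (Suc n))"
    by (rule ext) (simp add: etaD_def)
  note I = int_facts[OF mart]
  have e1: "AE x in M. real_cond_exp M (F n) (\<lambda>x. hD M F f n x + (xiD f (Suc n) x - etaD M F f (Suc n) x)) x
      = real_cond_exp M (F n) (hD M F f n) x + real_cond_exp M (F n) (\<lambda>x. xiD f (Suc n) x - etaD M F f (Suc n) x) x"
    by (rule real_cond_exp_add) (use I in auto)
  have e2: "AE x in M. real_cond_exp M (F n) (\<lambda>x. xiD f (Suc n) x - etaD M F f (Suc n) x) x
      = real_cond_exp M (F n) (xiD f (Suc n)) x - real_cond_exp M (F n) (etaD M F f (Suc n)) x"
    by (rule real_cond_exp_diff) (use I in auto)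
  have e3: "AE x in M. real_cond_exp M (F n) (hD M F f n) x = hD M F f n x"
    by (rule real_cond_exp_F_meas) (use I meas_facts(6)[OF mart] in auto)
  have e4: "AE x in M. real_cond_exp M (F n) (etaD M F f (Suc n)) x = etaD M F f (Suc n) x"
    by (rule real_cond_exp_F_meas) (use I meas_facts(5)[OF mart, of "Suc n" n] in auto)
  show "AE x in M. real_cond_exp M (F n) (hD M F f (Suc n)) x = hD M F f n x"
    using e1 e2 e3 e4 unfolding eq by eventually_elim (simp add: etaeq)
qed

lemma g_mart: assumes mart: "is_martingale0 M F f" shows "is_martingale0 M F (gD M F f)"
  unfolding is_martingale0_def
proof (intro conjI allI ballI)
  fix x assume "x \<in> space M"
  then show "gD M F f 0 x = 0" using mart by (simp add: gD_def hD_def is_martingale0_def)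
next
  fix n show "integrable M (gD M F f n)" by (rule int_facts(5)[OF mart])
next
  fix n show "gD M F f n \<in> borel_measurable (F n)" by (rule meas_facts(7)[OF mart])
next
  fix n
  interpret sigma_finite_subalgebra M "F n" by (rule sfs)
  have fi: "integrable M (f k)" for k using mart unfolding is_martingale0_def by auto
  have e1: "AE x in M. real_cond_exp M (F n) (gD M F f (Suc n)) x
      = real_cond_exp M (F n) (f (Suc n)) x - real_cond_exp M (F n) (hD M F f (Suc n)) x"
    unfolding gD_def by (rule real_cond_exp_diff) (use fi int_facts(4)[OF mart] in auto)
  have e2: "AE x in M. real_cond_exp M (F n) (f (Suc n)) x = f n x" using mart unfolding is_martingale0_def by auto
  have e3: "AE x in M. real_cond_exp M (F n) (hD M F f (Suc n)) x = hD M F f n x"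
    using h_mart[OF mart] unfolding is_martingale0_def by auto
  show "AE x in M. real_cond_exp M (F n) (gD M F f (Suc n)) x = gD M F f n x"
    using e1 e2 e3 by eventually_elim (simp add: gD_def)
qed

end

context mo_setting
begin

lemma eta_bound: assumes mart: "is_martingale0 M F f"
  shows "AE x in M. \<bar>etaD M F f (Suc n) x\<bar> \<le> real_cond_exp M (F n) (\<lambda>x. \<bar>xiD f (Suc n) x\<bar>) x"
proof -
  interpret sigma_finite_subalgebra M "F n" by (rule sfs)
  define \<xi> where "\<xi> = xiD f (Suc n)"
  have xii: "integrable M \<xi>" unfolding \<xi>_def by (rule int_facts(2)[OF mart])
  have xia: "integrable M (\<lambda>x. \<bar>\<xi> x\<bar>)" using xii by (rule integrable_abs)
  have xim: "integrable M (\<lambda>x. -1 * \<xi> x)" using xii by simp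
  have a1: "AE x in M. real_cond_exp M (F n) \<xi> x \<le> real_cond_exp M (F n) (\<lambda>x. \<bar>\<xi> x\<bar>) x"
    by (rule real_cond_exp_mono[OF _ xii xia]) auto
  have a2: "AE x in M. real_cond_exp M (F n) (\<lambda>x. -1 * \<xi> x) x \<le> real_cond_exp M (F n) (\<lambda>x. \<bar>\<xi> x\<bar>) x"
    by (rule real_cond_exp_mono[OF _ xim xia]) auto
  have a3: "AE x in M. real_cond_exp M (F n) (\<lambda>x. -1 * \<xi> x) x = -1 * real_cond_exp M (F n) \<xi> x"
    by (rule real_cond_exp_cmult[OF xii])
  show ?thesis using a1 a2 a3
    by eventually_elim (auto simp: etaD_def \<xi>_def)
qed

lemma Q_ctrl: assumes mart: "is_martingale0 M F f"
  shows "Q_control M F (gD M F f) (\<lambda>m x. 4 * sq_fun_n f m x + 2 * (\<Sum>k\<in>{1..Suc m}. \<bar>etaD M F f k x\<bar>))"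
  unfolding Q_control_def
proof (intro conjI allI ballI impI)
  fix m
  have [measurable]: "sq_fun_n f m \<in> borel_measurable (F m)" by (rule meas_facts(3)[OF mart]) simp
  have [measurable]: "(\<lambda>x. \<Sum>k\<in>{1..Suc m}. \<bar>etaD M F f k x\<bar>) \<in> borel_measurable (F m)"
  proof (rule borel_measurable_sum)
    fix k assume "k \<in> {1..Suc m}"
    then have [measurable]: "etaD M F f k \<in> borel_measurable (F m)" by (intro meas_facts(5)[OF mart]) auto
    show "(\<lambda>x. \<bar>etaD M F f k x\<bar>) \<in> borel_measurable (F m)" by measurable
  qed
  show "(\<lambda>x. 4 * sq_fun_n f m x + 2 * (\<Sum>k\<in>{1..Suc m}. \<bar>etaD M F f k x\<bar>)) \<in> borel_measurable (F m)"
    by measurable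
next
  fix n x
  show "0 \<le> 4 * sq_fun_n f n x + 2 * (\<Sum>k\<in>{1..Suc n}. \<bar>etaD M F f k x\<bar>)"
    using S_nonneg[of f n x] by (simp add: sum_nonneg)
  have "(\<Sum>k\<in>{1..Suc n}. \<bar>etaD M F f k x\<bar>) \<le> (\<Sum>k\<in>{1..Suc (Suc n)}. \<bar>etaD M F f k x\<bar>)"
    by (simp add: sum.cl_ivl_Suc[of _ 1 "Suc n"])
  then show "4 * sq_fun_n f n x + 2 * (\<Sum>k\<in>{1..Suc n}. \<bar>etaD M F f k x\<bar>)
      \<le> 4 * sq_fun_n f (Suc n) x + 2 * (\<Sum>k\<in>{1..Suc (Suc n)}. \<bar>etaD M F f k x\<bar>)"
    using S_mono_Suc[of f n x] by linarith
next
  fix n :: nat and x assume n: "1 \<le> n"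
  then obtain m where m: "n = Suc m" by (cases n) auto
  define z where "z = (\<lambda>k. mart_diff f k x - xiD f k x)"
  define e where "e = (\<lambda>k. etaD M F f k x)"
  define dd where "dd = (\<lambda>k. mart_diff f k x)"
  have Sm: "sq_fun_n f m x = sqrt (\<Sum>k\<in>{1..m}. (dd k)^2)" by (simp add: sq_fun_n_def dd_def)
  have zd: "(z k)^2 \<le> (dd k)^2" for k by (simp add: z_def dd_def xiD_def)
  have zl: "\<bar>z (Suc m)\<bar> \<le> 2 * sqrt (\<Sum>k\<in>{1..m}. (dd k)^2)"
  proof (cases "2 * sq_fun_n f m x < sq_fun_n f (Suc m) x")
    case True then show ?thesis using S_nonneg[of f m x] unfolding Sm[symmetric] by (simp add: z_def xiD_def)
  next
    case False
    have "\<bar>mart_diff f (Suc m) x\<bar> \<le> sq_fun_n f (Suc m) x" unfolding S_Suc by (rule sqrt_step(2)[OF S_nonneg])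
    then show ?thesis using False unfolding Sm[symmetric] by (simp add: z_def xiD_def)
  qed
  have "sq_fun_n (gD M F f) n x = sqrt (\<Sum>k\<in>{1..Suc m}. (z k + e k)^2)"
    unfolding sq_fun_n_def m
    by (intro arg_cong[where f=sqrt] sum.cong refl) (simp add: mart_diff_g z_def e_def)
  also have "\<dots> \<le> 4 * sqrt (\<Sum>k\<in>{1..m}. (dd k)^2) + 2 * (\<Sum>k\<in>{1..Suc m}. \<bar>e k\<bar>)"
    by (rule Q_real[OF zd zl])
  also have "\<dots> = 4 * sq_fun_n f (n - 1) x + 2 * (\<Sum>k\<in>{1..Suc (n - 1)}. \<bar>etaD M F f k x\<bar>)"
    by (simp add: m Sm e_def)
  finally show "sq_fun_n (gD M F f) n x \<le> 4 * sq_fun_n f (n - 1) x + 2 * (\<Sum>k\<in>{1..Suc (n - 1)}. \<bar>etaD M F f k x\<bar>)" .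
qed

end

context mo_setting
begin

lemma main_bounds:
  assumes mart: "is_martingale0 M F f" and l: "0 < l" and HSl: "HS_norm M \<phi> f < ennreal l"
  shows "G_norm M \<phi> (hD M F f) \<le> ennreal (32 * C0 * (8*(K*C0+1)) * l)"
    and "Q_norm M F \<phi> (gD M F f) \<le> ennreal (32 * C0 * (8*(K*C0+1)) * l)"
proof -
  interpret prob_space M by (rule prob)
  define D where "D = 8*(K*C0+1)"
  have KC0: "0 \<le> K*C0" using K C0 by simp
  have D: "8 \<le> D" unfolding D_def using KC0 by simp
  have C0p: "0 < C0" using C0 by simp
  have phimono: "\<And>x t t'. x \<in> space M \<Longrightarrow> 0 \<le> t \<Longrightarrow> t \<le> t' \<Longrightarrow> ennreal (\<phi> x t) \<le> ennreal (\<phi> x t')"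
    by (intro ennreal_leI phi_mono) auto
  have "modphi (sq_fun f) l \<le> 1"
    by (rule lux_less[OF phimono]) (use HSl in \<open>unfold HS_norm_def lux_phi_def\<close>)
  then have rhoS: "rho M \<phi> (sq_fun f) l \<le> 1" using rho_le_modphi[OF l, of "sq_fun f"] by simp
  have Sm[measurable]: "sq_fun f \<in> borel_measurable M"
  proof -
    have [measurable]: "sq_fun_n f n \<in> borel_measurable M" for n by (rule meas_M, rule meas_facts(3)[OF mart, of n n]) simp
    show ?thesis unfolding sq_fun_def[abs_def] by measurable
  qed
  define Z where "Z = (\<lambda>k x. \<bar>xiD f (Suc k) x\<bar>)"
  have Zi: "integrable M (Z k)" for k unfolding Z_def by (rule integrable_abs[OF int_facts(2)[OF mart]])
  have Zp: "0 \<le> Z k x" for k x unfolding Z_def by simp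
  have Zm[measurable]: "Z k \<in> borel_measurable M" for k using Zi by auto
  define B where "B = (\<lambda>x. \<Sum>k. ennreal (Z k x))"
  define A where "A = (\<lambda>x. \<Sum>k. ennreal (real_cond_exp M (F k) (Z k) x))"
  have Bm[measurable]: "B \<in> borel_measurable M" unfolding B_def by measurable
  have Am[measurable]: "A \<in> borel_measurable M" unfolding A_def by measurable
  have rhoB: "rho M \<phi> B (2*l) \<le> 1"
  proof -
    have "rho M \<phi> B (2*l) \<le> rho M \<phi> (\<lambda>x. ennreal 2 * sq_fun f x) (2*l)"
      by (rule rho_mono_AE, rule AE_I2) (simp add: B_def Z_def xi_sum_le del: ennreal_numeral)
    also have "\<dots> = rho M \<phi> (sq_fun f) l" by (rule rho_scale) (use l in auto)
    finally show ?thesis using rhoS by simp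
  qed
  define a where "a = D * (2*l)"
  have a: "0 < a" "2*l \<le> a" unfolding a_def using D l by auto
  have rhoA: "rho M \<phi> A a \<le> 1"
    unfolding a_def D_def A_def by (rule key[OF Zi Zp _ rhoB[unfolded B_def]]) (use l in simp)
  have rhoB': "rho M \<phi> B a \<le> 1" using rho_mono_l[of "2*l" a B] a l rhoB by simp
  have etaAE: "AE x in M. \<forall>n. \<bar>etaD M F f (Suc n) x\<bar> \<le> real_cond_exp M (F n) (Z n) x"
    unfolding AE_all_countable Z_def using eta_bound[OF mart] by blast
  define Gf where "Gf = (\<lambda>x. \<Sum>n. ennreal \<bar>mart_diff (hD M F f) (Suc n) x\<bar>)"
  have GAE: "AE x in M. Gf x \<le> B x + A x"
    using etaAE
  proof eventually_elim
    case (elim x)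
    have "Gf x \<le> (\<Sum>n. ennreal (Z n x) + ennreal (real_cond_exp M (F n) (Z n) x))"
      unfolding Gf_def
    proof (rule suminf_le[OF _ summableI summableI])
      fix n
      have "ennreal \<bar>mart_diff (hD M F f) (Suc n) x\<bar> \<le> ennreal (\<bar>xiD f (Suc n) x\<bar> + \<bar>etaD M F f (Suc n) x\<bar>)"
        unfolding mart_diff_h by (rule ennreal_leI) linarith
      also have "\<dots> = ennreal (Z n x) + ennreal \<bar>etaD M F f (Suc n) x\<bar>"
        unfolding Z_def by (rule ennreal_plus) auto
      also have "\<dots> \<le> ennreal (Z n x) + ennreal (real_cond_exp M (F n) (Z n) x)"
        using elim by (intro add_left_mono ennreal_leI) auto
      finally show "ennreal \<bar>mart_diff (hD M F f) (Suc n) x\<bar> \<le> ennreal (Z n x) + ennreal (real_cond_exp M (F n) (Z n) x)" .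
    qed
    also have "\<dots> = B x + A x" unfolding B_def A_def by (rule suminf_add[OF summableI summableI, symmetric])
    finally show ?case .
  qed
  have "rho M \<phi> Gf (4*C0*a) \<le> rho M \<phi> (\<lambda>x. B x + A x) (4*C0*a)" by (rule rho_mono_AE[OF GAE])
  also have "\<dots> \<le> 1" by (rule rho_tri[OF Bm Am a(1) rhoB' rhoA])
  finally have rG: "rho M \<phi> Gf (4*C0*a) \<le> 1" .
  have "modphi Gf (8*C0*a) \<le> rho M \<phi> Gf (8*C0*a/2)" by (rule modphi_le_rho) (use a C0p in simp)
  also have "8*C0*a/2 = 4*C0*a" by simp
  finally have "modphi Gf (8*C0*a) \<le> 1" using rG by simp
  then have "G_norm M \<phi> (hD M F f) \<le> ennreal (8*C0*a)"
    unfolding G_norm_def lux_phi_def Gf_def[symmetric] by (rule lux_le[rotated]) (use a C0p in simp)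
  also have "\<dots> \<le> ennreal (32 * C0 * (8*(K*C0+1)) * l)"
    unfolding a_def D_def[symmetric] using C0p D l by (intro ennreal_leI) (simp add: mult_right_mono)
  finally show "G_norm M \<phi> (hD M F f) \<le> ennreal (32 * C0 * (8*(K*C0+1)) * l)" .
  define lam where "lam = (\<lambda>m x. 4 * sq_fun_n f m x + 2 * (\<Sum>k\<in>{1..Suc m}. \<bar>etaD M F f k x\<bar>))"
  have "Q_norm M F \<phi> (gD M F f) \<le> lux_phi M \<phi> (\<lambda>x. SUP n. ennreal (lam n x))"
    unfolding Q_norm_def by (rule INF_lower) (use Q_ctrl[OF mart] in \<open>simp add: lam_def\<close>)
  define Lf where "Lf = (\<lambda>x. SUP n. ennreal (lam n x))"
  have Lle: "Lf x \<le> ennreal 4 * sq_fun f x + ennreal 2 * (\<Sum>k. ennreal \<bar>etaD M F f (Suc k) x\<bar>)" for x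
    unfolding Lf_def
  proof (rule SUP_least)
    fix n
    have e: "(\<Sum>k\<in>{1..Suc n}. \<bar>etaD M F f k x\<bar>) = (\<Sum>k<Suc n. \<bar>etaD M F f (Suc k) x\<bar>)"
      using sum.atLeast1_atMost_eq[of "\<lambda>k. \<bar>etaD M F f k x\<bar>" "Suc n"] by simp
    have "ennreal (lam n x) = ennreal 4 * ennreal (sq_fun_n f n x) + ennreal 2 * ennreal (\<Sum>k<Suc n. \<bar>etaD M F f (Suc k) x\<bar>)"
    proof -
      define T where "T = (\<Sum>k<Suc n. \<bar>etaD M F f (Suc k) x\<bar>)"
      define S where "S = sq_fun_n f n x"
      have T0: "0 \<le> T" unfolding T_def by (simp add: sum_nonneg)
      have S0: "0 \<le> S" unfolding S_def by (rule S_nonneg)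
      have "lam n x = 4 * S + 2 * T" unfolding lam_def e S_def T_def ..
      then have "ennreal (lam n x) = ennreal (4 * S) + ennreal (2 * T)"
        using S0 T0 by (simp only: ennreal_plus[symmetric])
      also have "\<dots> = ennreal 4 * ennreal S + ennreal 2 * ennreal T"
        using S0 T0 by (simp only: ennreal_mult)
      finally show ?thesis unfolding S_def T_def .
    qed
    also have "\<dots> \<le> ennreal 4 * sq_fun f x + ennreal 2 * (\<Sum>k. ennreal \<bar>etaD M F f (Suc k) x\<bar>)"
    proof (intro add_mono mult_left_mono)
      show "ennreal (sq_fun_n f n x) \<le> sq_fun f x" unfolding sq_fun_def by (rule SUP_upper) simp
      have "ennreal (\<Sum>k<Suc n. \<bar>etaD M F f (Suc k) x\<bar>) = (\<Sum>k<Suc n. ennreal \<bar>etaD M F f (Suc k) x\<bar>)"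
        by simp
      also have "\<dots> \<le> (\<Sum>k. ennreal \<bar>etaD M F f (Suc k) x\<bar>)" by (rule sum_le_suminf[OF summableI]) auto
      finally show "ennreal (\<Sum>k<Suc n. \<bar>etaD M F f (Suc k) x\<bar>) \<le> (\<Sum>k. ennreal \<bar>etaD M F f (Suc k) x\<bar>)" .
    qed auto
    finally show "ennreal (lam n x) \<le> ennreal 4 * sq_fun f x + ennreal 2 * (\<Sum>k. ennreal \<bar>etaD M F f (Suc k) x\<bar>)" .
  qed
  have LAE: "AE x in M. Lf x \<le> ennreal 4 * sq_fun f x + ennreal 2 * A x"
    using etaAE
  proof eventually_elim
    case (elim x)
    have "(\<Sum>k. ennreal \<bar>etaD M F f (Suc k) x\<bar>) \<le> A x"
      unfolding A_def by (rule suminf_le[OF _ summableI summableI]) (use elim in \<open>auto intro: ennreal_leI\<close>)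
    then show ?case using Lle[of x] by (meson add_left_mono mult_left_mono order.trans zero_le)
  qed
  define a' where "a' = 2*a"
  have a': "0 < a'" "4*l \<le> a'" unfolding a'_def using a by auto
  have r4: "rho M \<phi> (\<lambda>x. ennreal 4 * sq_fun f x) a' \<le> 1"
  proof -
    have "rho M \<phi> (\<lambda>x. ennreal 4 * sq_fun f x) a' \<le> rho M \<phi> (\<lambda>x. ennreal 4 * sq_fun f x) (4*l)"
      by (rule rho_mono_l) (use a' l in auto)
    also have "\<dots> = rho M \<phi> (sq_fun f) l" by (rule rho_scale) (use l in auto)
    finally show ?thesis using rhoS by simp
  qed
  have r2: "rho M \<phi> (\<lambda>x. ennreal 2 * A x) a' \<le> 1"
    unfolding a'_def using rho_scale[of 2 a A] a rhoA by simp
  have "rho M \<phi> Lf (4*C0*a') \<le> rho M \<phi> (\<lambda>x. ennreal 4 * sq_fun f x + ennreal 2 * A x) (4*C0*a')"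
    by (rule rho_mono_AE[OF LAE])
  also have "\<dots> \<le> 1" by (rule rho_tri[OF _ _ a'(1) r4 r2]) measurable
  finally have rL: "rho M \<phi> Lf (4*C0*a') \<le> 1" .
  have "modphi Lf (8*C0*a') \<le> rho M \<phi> Lf (8*C0*a'/2)" by (rule modphi_le_rho) (use a' C0p in simp)
  also have "8*C0*a'/2 = 4*C0*a'" by simp
  finally have "modphi Lf (8*C0*a') \<le> 1" using rL by simp
  then have "lux_phi M \<phi> Lf \<le> ennreal (8*C0*a')"
    unfolding lux_phi_def by (rule lux_le[rotated]) (use a' C0p in simp)
  also have "8*C0*a' = 32 * C0 * (8*(K*C0+1)) * l" unfolding a'_def a_def D_def by simp
  finally show "Q_norm M F \<phi> (gD M F f) \<le> ennreal (32 * C0 * (8*(K*C0+1)) * l)"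
    using \<open>Q_norm M F \<phi> (gD M F f) \<le> lux_phi M \<phi> (\<lambda>x. SUP n. ennreal (lam n x))\<close> unfolding Lf_def by simp
qed

end

theorem lemma5p10:
  fixes M :: "'a measure" and F :: "nat \<Rightarrow> 'a measure"
    and \<phi> :: "'a \<Rightarrow> real \<Rightarrow> real" and p :: real
  assumes "prob_space M"
    and "filtration_seq M F"
    and "musielak_orlicz M \<phi>"
    and "1 \<le> p"
    and "unif_lower_type M \<phi> p"
    and "\<exists>K. \<forall>g. g \<in> borel_measurable M \<and> integrable M g \<and>
               lux M (conj_fun \<phi>) (\<lambda>x. ennreal \<bar>g x\<bar>) < \<infinity> \<longrightarrow>
               lux M (conj_fun \<phi>) (doob_max M F g) \<le> ennreal K * lux M (conj_fun \<phi>) (\<lambda>x. ennreal \<bar>g x\<bar>)"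
  shows "\<exists>C>0. \<forall>f. is_martingale0 M F f \<and> HS_norm M \<phi> f < \<infinity> \<longrightarrow>
           (\<exists>h g. is_martingale0 M F h \<and> G_norm M \<phi> h < \<infinity> \<and>
                  is_martingale0 M F g \<and> Q_norm M F \<phi> g < \<infinity> \<and>
                  (\<forall>n. AE x in M. f n x = h n x + g n x) \<and>
                  G_norm M \<phi> h \<le> ennreal C * HS_norm M \<phi> f \<and>
                  Q_norm M F \<phi> g \<le> ennreal C * HS_norm M \<phi> f)"
proof -
  obtain Cl where Cl: "Cl > 0" "\<And>x s t. x \<in> space M \<Longrightarrow> s \<in> {0<..<1} \<Longrightarrow> 0 \<le> t \<Longrightarrow> \<phi> x (s*t) \<le> Cl * s powr p * \<phi> x t"
    using assms(5) unfolding unif_lower_type_def by blast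
  obtain K0 where K0: "\<And>g. g \<in> borel_measurable M \<Longrightarrow> integrable M g \<Longrightarrow>
               lux M (conj_fun \<phi>) (\<lambda>x. ennreal \<bar>g x\<bar>) < \<infinity> \<Longrightarrow>
               lux M (conj_fun \<phi>) (doob_max M F g) \<le> ennreal K0 * lux M (conj_fun \<phi>) (\<lambda>x. ennreal \<bar>g x\<bar>)"
    using assms(6) by blast
  define C0 where "C0 = max Cl 1"
  define K where "K = max K0 0"
  have ms: "mo_setting M F \<phi> C0 K"
  proof (rule mo_setting.intro)
    show "prob_space M" by (fact assms(1))
    show "filtration_seq M F" by (fact assms(2))
    show "musielak_orlicz M \<phi>" by (fact assms(3))
    show "1 \<le> C0" by (auto simp: C0_def)
    show "0 \<le> K" by (auto simp: K_def)
  next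
    fix x and s t :: real assume x: "x \<in> space M" and s: "0 < s" "s < 1" and t: "0 \<le> t"
    have ph: "0 \<le> \<phi> x t"
    proof -
      have "mono_on {0..} (\<phi> x)" "\<phi> x 0 = 0" using assms(3) x unfolding musielak_orlicz_def by auto
      then show ?thesis using t by (metis atLeast_iff mono_onD order_refl)
    qed
    have sp: "s powr p \<le> s"
    proof -
      have "s powr p \<le> s powr 1" by (rule powr_mono') (use s assms(4) in auto)
      then show ?thesis using s by simp
    qed
    have "\<phi> x (s*t) \<le> Cl * s powr p * \<phi> x t" using Cl(2)[OF x _ t] s by auto
    also have "\<dots> \<le> C0 * s * \<phi> x t"
    proof (rule mult_right_mono[OF _ ph])
      show "Cl * s powr p \<le> C0 * s"
        by (rule mult_mono) (use sp Cl s in \<open>auto simp: C0_def\<close>)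
    qed
    finally show "\<phi> x (s*t) \<le> C0 * s * \<phi> x t" .
  next
    fix g :: "'a \<Rightarrow> real"
    assume g: "g \<in> borel_measurable M" "integrable M g" "lux M (conj_fun \<phi>) (\<lambda>x. ennreal \<bar>g x\<bar>) < \<infinity>"
    have "ennreal K0 \<le> ennreal K" unfolding K_def by (rule ennreal_leI) simp
    then show "lux M (conj_fun \<phi>) (doob_max M F g) \<le> ennreal K * lux M (conj_fun \<phi>) (\<lambda>x. ennreal \<bar>g x\<bar>)"
      using K0[OF g] by (meson mult_right_mono order.trans zero_le)
  qed
  interpret mo_setting M F \<phi> C0 K by (rule ms)
  define C where "C = 32 * C0 * (8*(K*C0+1))"
  have KC: "0 \<le> K*C0" using C0 K by simp
  have Cp: "0 < C" unfolding C_def using C0 KC by (intro mult_pos_pos) auto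
  show ?thesis
  proof (intro exI[of _ C] conjI allI impI Cp)
    fix f assume fa: "is_martingale0 M F f \<and> HS_norm M \<phi> f < \<infinity>"
    then have mart: "is_martingale0 M F f" and HS: "HS_norm M \<phi> f < \<infinity>" by auto
    have Gb: "G_norm M \<phi> (hD M F f) \<le> ennreal C * HS_norm M \<phi> f"
      by (rule ennreal_eps_lemma[OF HS Cp]) (unfold C_def, rule main_bounds(1)[OF mart])
    have Qb: "Q_norm M F \<phi> (gD M F f) \<le> ennreal C * HS_norm M \<phi> f"
      by (rule ennreal_eps_lemma[OF HS Cp]) (unfold C_def, rule main_bounds(2)[OF mart])
    have fin: "ennreal C * HS_norm M \<phi> f < \<infinity>"
      using HS unfolding infinity_ennreal_def by (simp add: ennreal_mult_less_top)
    show "\<exists>h g. is_martingale0 M F h \<and> G_norm M \<phi> h < \<infinity> \<and>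
                  is_martingale0 M F g \<and> Q_norm M F \<phi> g < \<infinity> \<and>
                  (\<forall>n. AE x in M. f n x = h n x + g n x) \<and>
                  G_norm M \<phi> h \<le> ennreal C * HS_norm M \<phi> f \<and>
                  Q_norm M F \<phi> g \<le> ennreal C * HS_norm M \<phi> f"
    proof (intro exI conjI allI)
      show "is_martingale0 M F (hD M F f)" by (rule h_mart[OF mart])
      show "is_martingale0 M F (gD M F f)" by (rule g_mart[OF mart])
      show "G_norm M \<phi> (hD M F f) < \<infinity>" using Gb fin by (rule le_less_trans)
      show "Q_norm M F \<phi> (gD M F f) < \<infinity>" using Qb fin by (rule le_less_trans)
      fix n show "AE x in M. f n x = hD M F f n x + gD M F f n x" by (rule AE_I2) (simp add: gD_def)
    qed (fact Gb Qb)+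
  qed
qed

end
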